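(* For $x\in\mathbb{C}\setminus\{0,1\}$ in a small open set, consider the elliptic curve $v^2=u(u-1)(u-x)$. Let $\mathcal{A},\mathcal{B}$ be generators of its first homology, transported continuously in $x$ and avoiding the branch points and infinity. Let $\gamma=c_1\mathcal{A}+c_2\mathcal{B}$ with constants $c_1,c_2$. Set $$a_1=\oint_\gamma\frac{du}{uv},\qquad a_2=\oint_\gamma\frac{du}{(u-1)v}.$$ Then, wherever the denominator does not vanish, the function $$y(x)=\frac{x\,a_1}{x\,a_1+(x-1)\,a_2}=-\frac{x\oint_\gamma\frac{du}{uv}}{x\oint_\gamma\frac{du}{(u-x)v}+\oint_\gamma\frac{du}{(u-1)v}}$$ solves the Painlevé VI equation with parameters $(\hat\alpha,\hat\beta,\hat\gamma,\hat\delta)=(1/8,-1/8,1/8,3/8)$.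
   Context: The Painlevé VI equation with parameters $\hat\alpha,\hat\beta,\hat\gamma,\hat\delta$ is $$y''=\tfrac12\Big(\tfrac1y+\tfrac1{y-1}+\tfrac1{y-x}\Big)(y')^2-\Big(\tfrac1x+\tfrac1{x-1}+\tfrac1{y-x}\Big)y'+\frac{y(y-1)(y-x)}{x^2(x-1)^2}\Big(\hat\alpha+\hat\beta\frac{x}{y^2}+\hat\gamma\frac{x-1}{(y-1)^2}+\hat\delta\frac{x(x-1)}{(y-x)^2}\Big).$$ *)

theory Defs
  imports "HOL-Complex_Analysis.Complex_Analysis"
begin

text \<open>A loop on the affine elliptic curve v^2 = u(u-1)(u-x), represented by its
projection g to the u-plane (a closed piecewise-smooth path avoiding the branch
points 0, 1, x) together with a continuous choice v of the square root along it
(which returns to its initial value, so the lift is closed on the curve).\<close>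

definition lifted_cycle_family ::
  "complex set \<Rightarrow> (complex \<Rightarrow> real \<Rightarrow> complex) \<Rightarrow> (complex \<Rightarrow> real \<Rightarrow> complex) \<Rightarrow> bool" where
  "lifted_cycle_family U g v \<longleftrightarrow>
     continuous_on (U \<times> {0..1}) (\<lambda>(x, t). g x t) \<and>
     continuous_on (U \<times> {0..1}) (\<lambda>(x, t). v x t) \<and>
     (\<forall>x\<in>U. valid_path (g x) \<and> pathfinish (g x) = pathstart (g x) \<and> v x 1 = v x 0 \<and>
        (\<forall>t\<in>{0..1}. g x t \<notin> {0, 1, x} \<and> (v x t)\<^sup>2 = g x t * (g x t - 1) * (g x t - x)))"

definition curve_period ::
  "(complex \<Rightarrow> complex) \<Rightarrow> (real \<Rightarrow> complex) \<Rightarrow> (real \<Rightarrow> complex) \<Rightarrow> complex" where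
  "curve_period f g v =
     integral {0..1} (\<lambda>t. f (g t) / v t * vector_derivative g (at t within {0..1}))"

definition painleve_VI ::
  "complex \<Rightarrow> complex \<Rightarrow> complex \<Rightarrow> complex \<Rightarrow> (complex \<Rightarrow> complex) \<Rightarrow> complex \<Rightarrow> bool" where
  "painleve_VI al be ga de y x \<longleftrightarrow>
     (let Y = y x; Y' = deriv y x; Y'' = deriv (deriv y) x in
      Y'' = 1/2 * (1/Y + 1/(Y - 1) + 1/(Y - x)) * Y'\<^sup>2
            - (1/x + 1/(x - 1) + 1/(Y - x)) * Y'
            + Y * (Y - 1) * (Y - x) / (x\<^sup>2 * (x - 1)\<^sup>2)
              * (al + be * x / Y\<^sup>2 + ga * (x - 1) / (Y - 1)\<^sup>2 + de * x * (x - 1) / (Y - x)\<^sup>2))"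

end

theory Submission
  imports Defs
begin

lemma sqrt_branch_eq:
  fixes f g :: "'a::topological_space \<Rightarrow> complex"
  assumes S: "connected S" and cf: "continuous_on S f" and cg: "continuous_on S g"
    and sq: "\<And>z. z\<in>S \<Longrightarrow> f z ^ 2 = g z ^ 2" and nz: "\<And>z. z\<in>S \<Longrightarrow> g z \<noteq> 0"
    and z0: "z0 \<in> S" "f z0 = g z0" and z: "z \<in> S"
  shows "f z = g z"
proof -
  define q where "q = (\<lambda>z. f z / g z)"
  have cq: "continuous_on S q" unfolding q_def using cf cg nz by (intro continuous_intros) auto
  have sub: "q ` S \<subseteq> {1, -1}"
  proof
    fix w assume "w \<in> q ` S"
    then obtain z where z: "z \<in> S" "w = q z" by auto
    have "(f z / g z)^2 = 1" using sq[OF z(1)] nz[OF z(1)] by (simp add: power_divide)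
    then have "f z / g z = 1 \<or> f z / g z = -1"
      by (metis power2_eq_1_iff)
    then show "w \<in> {1,-1}" using z q_def by auto
  qed
  have conn: "connected (q ` S)" using connected_continuous_image[OF cq S] .
  have "finite (q ` S)" using sub finite_subset by blast
  then obtain a where a: "q ` S = {a}" using connected_finite_iff_sing[OF conn] z0 by auto
  have "q z0 = 1" using z0 nz unfolding q_def by auto
  then have "q z = 1" using a z0 z by (metis image_eqI singletonD)
  then show ?thesis using nz[OF z] unfolding q_def by (simp add: divide_eq_eq)
qed

lemma near1_not_nonpos: "norm (w - 1) < 1 \<Longrightarrow> (w::complex) \<notin> \<real>\<^sub>\<le>\<^sub>0"
proof
  assume "norm (w - 1) < 1" "w \<in> \<real>\<^sub>\<le>\<^sub>0"
  then obtain r where "w = of_real r" "r \<le> 0" by (auto simp: nonpos_Reals_def)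
  then have "norm (w - 1) = 1 - r"
    by (metis abs_of_nonpos diff_le_0_iff_le norm_of_real of_real_1 of_real_diff abs_minus_commute dual_order.trans zero_le_one abs_of_nonneg diff_ge_0_iff_ge)
  then show False using \<open>norm (w - 1) < 1\<close> \<open>r \<le> 0\<close> by simp
qed

lemma ratio_near1: "norm (u - c) < norm (c::complex) \<Longrightarrow> norm (u / c - 1) < (1::real)"
proof -
  assume a: "norm (u - c) < norm c"
  then have "c \<noteq> 0" by auto
  then have "u / c - 1 = (u - c) / c" by (simp add: diff_divide_distrib)
  then show ?thesis using a \<open>c\<noteq>0\<close> by (simp add: norm_divide divide_less_eq)
qed

lemma valid_path_diff_points:
  assumes "valid_path g"
  obtains K where "finite K" "\<And>t. t \<in> {0..1} - K \<Longrightarrow> g differentiable at t"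
  using assms unfolding valid_path_def piecewise_C1_differentiable_on_def C1_differentiable_on_eq
  by blast

lemma vd_within_eq:
  assumes "g differentiable at t" "a \<le> t" "t \<le> b" "a < b"
  shows "vector_derivative g (at t within {a..b}) = vector_derivative g (at t)"
  using assms vector_derivative_at_within_ivl vector_derivative_works by blast

lemma prim_diff:
  assumes "convex S" "\<And>u. u \<in> S \<Longrightarrow> (G1 has_field_derivative F u) (at u)"
    "\<And>u. u \<in> S \<Longrightarrow> (G2 has_field_derivative F u) (at u)" "u \<in> S" "w \<in> S"
  shows "G1 u - G1 w = G2 u - (G2 w :: complex)"
proof -
  have "\<exists>c. \<forall>x\<in>S. G1 x - G2 x = c"
  proof (rule has_field_derivative_zero_constant[OF assms(1)])
    fix x assume "x \<in> S"
    then have "((\<lambda>x. G1 x - G2 x) has_field_derivative F x - F x) (at x)"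
      using assms by (intro derivative_intros) auto
    then show "((\<lambda>x. G1 x - G2 x) has_field_derivative 0) (at x within S)"
      by (simp add: has_field_derivative_at_within)
  qed
  then obtain c where "\<forall>x\<in>S. G1 x - G2 x = c" by blast
  then have "G1 u - G2 u = G1 w - G2 w" using assms(4,5) by auto
  then show ?thesis by (simp add: algebra_simps)
qed

lemma piece_integral:
  fixes \<gamma> V :: "real \<Rightarrow> complex"
  assumes vp: "valid_path \<gamma>" and ab: "0 \<le> a" "a < b" "b \<le> 1"
    and G: "\<And>u. u \<in> S \<Longrightarrow> (G has_field_derivative F u) (at u)"
    and inS: "\<And>s. s \<in> {a..b} \<Longrightarrow> \<gamma> s \<in> S"
    and FV: "\<And>s. s \<in> {a..b} \<Longrightarrow> f (\<gamma> s) / V s = F (\<gamma> s)"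
  shows "((\<lambda>t. f (\<gamma> t) / V t * vector_derivative \<gamma> (at t within {0..1})) has_integral (G (\<gamma> b) - G (\<gamma> a))) {a..b}"
proof -
  obtain K where K: "finite K" "\<And>t. t \<in> {0..1} - K \<Longrightarrow> \<gamma> differentiable at t"
    using valid_path_diff_points[OF vp] by blast
  have pd: "\<gamma> piecewise_differentiable_on {a..b}"
    using vp ab unfolding valid_path_def
    by (auto intro: piecewise_differentiable_on_subset[OF piecewise_C1_imp_differentiable])
  have I: "((\<lambda>t. F (\<gamma> t) * vector_derivative \<gamma> (at t within {a..b})) has_integral (G (\<gamma> b) - G (\<gamma> a))) {a..b}"
    using contour_integral_primitive_lemma[of a b S G F \<gamma>] ab pd inS G
    by (auto simp: has_field_derivative_at_within)
  show ?thesis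
  proof (rule has_integral_spike_finite[OF _ _ I])
    show "finite (K \<union> {a,b})" using K by auto
    fix t assume t: "t \<in> {a..b} - (K \<union> {a,b})"
    then have d: "\<gamma> differentiable at t" using K ab by auto
    have "vector_derivative \<gamma> (at t within {0..1}) = vector_derivative \<gamma> (at t)"
      using vd_within_eq[OF d] t ab by auto
    moreover have "vector_derivative \<gamma> (at t within {a..b}) = vector_derivative \<gamma> (at t)"
      using vd_within_eq[OF d] t ab by auto
    ultimately show "f (\<gamma> t) / V t * vector_derivative \<gamma> (at t within {0..1}) = F (\<gamma> t) * vector_derivative \<gamma> (at t within {a..b})"
      using FV t by auto
  qed
qed

lemma poly_period:
  fixes \<gamma> V :: "real \<Rightarrow> complex" and f :: "complex \<Rightarrow> complex" and c :: "nat \<Rightarrow> complex"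
    and h :: "nat \<Rightarrow> complex \<Rightarrow> complex" and R :: real and N :: nat
  assumes vp: "valid_path \<gamma>" and closed: "\<gamma> 1 = \<gamma> 0" and N: "N > 0"
   and hol: "\<And>k. k \<le> N \<Longrightarrow> (\<lambda>u. f u / h k u) holomorphic_on ball (c k) R"
   and inb: "\<And>k s. k < N \<Longrightarrow> s \<in> {real k / N .. real (Suc k) / N} \<Longrightarrow> \<gamma> s \<in> ball (c k) R \<and> V s = h k (\<gamma> s)"
   and cnext: "\<And>k. k < N \<Longrightarrow> c (Suc k) \<in> ball (c k) R"
   and hagree: "\<And>k u. k < N \<Longrightarrow> u \<in> ball (c k) R \<inter> ball (c (Suc k)) R \<Longrightarrow> h k u = h (Suc k) u"
   and cN: "c N = c 0" and hN: "h N = h 0"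
  shows "((\<lambda>t. f (\<gamma> t) / V t * vector_derivative \<gamma> (at t within {0..1})) has_integral
           (\<Sum>k<N. contour_integral (linepath (c k) (c (Suc k))) (\<lambda>u. f u / h k u))) {0..1}"
proof -
  define F where "F = (\<lambda>t. f (\<gamma> t) / V t * vector_derivative \<gamma> (at t within {0..1}))"
  define t where "t = (\<lambda>k::nat. real k / real N)"
  have "\<forall>k. \<exists>G. k \<le> N \<longrightarrow> (\<forall>u \<in> ball (c k) R. (G has_field_derivative f u / h k u) (at u))"
  proof
    fix k show "\<exists>G. k \<le> N \<longrightarrow> (\<forall>u \<in> ball (c k) R. (G has_field_derivative f u / h k u) (at u))"
    proof (cases "k \<le> N")
      case True
      obtain G where "\<And>u. u \<in> ball (c k) R \<Longrightarrow> (G has_field_derivative f u / h k u) (at u within ball (c k) R)"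
        using holomorphic_convex_primitive'[OF convex_ball open_ball hol[OF True]] by blast
      then show ?thesis by (metis at_within_open open_ball)
    qed auto
  qed
  then obtain G where G0: "\<forall>k. k \<le> N \<longrightarrow> (\<forall>u \<in> ball (c k) R. (G k has_field_derivative f u / h k u) (at u))"
    using choice[OF \<open>\<forall>k. \<exists>G. _\<close>] by blast
  have G: "\<And>k u. k \<le> N \<Longrightarrow> u \<in> ball (c k) R \<Longrightarrow> (G k has_field_derivative f u / h k u) (at u)"
    using G0 by blast
  have "\<gamma> 0 \<in> ball (c 0) R" using inb[of 0 0] N by (auto simp: t_def)
  then have Rpos: "R > 0" by (metis ball_eq_empty empty_iff not_less)
  have tk: "0 \<le> t k" "t k < t (Suc k)" "t (Suc k) \<le> 1" if "k < N" for k
    using that N by (auto simp: t_def divide_simps)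
  have piece: "(F has_integral (G k (\<gamma> (t (Suc k))) - G k (\<gamma> (t k)))) {t k..t (Suc k)}" if k: "k < N" for k
    unfolding F_def
  proof (rule piece_integral[OF vp tk[OF k], where S="ball (c k) R" and F="\<lambda>u. f u / h k u"])
    show "\<And>u. u \<in> ball (c k) R \<Longrightarrow> (G k has_field_derivative f u / h k u) (at u)" using G k by auto
    show "\<And>s. s \<in> {t k..t (Suc k)} \<Longrightarrow> \<gamma> s \<in> ball (c k) R" using inb k by (auto simp: t_def)
    show "\<And>s. s \<in> {t k..t (Suc k)} \<Longrightarrow> f (\<gamma> s) / V s = f (\<gamma> s) / h k (\<gamma> s)" using inb k by (auto simp: t_def)
  qed
  have comb: "m \<le> N \<Longrightarrow> (F has_integral (\<Sum>k<m. G k (\<gamma> (t (Suc k))) - G k (\<gamma> (t k)))) {0..t m}" for m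
  proof (induction m)
    case 0 then show ?case using has_integral_refl(2)[of F 0] by (simp add: t_def)
  next
    case (Suc m)
    then have m: "m < N" by auto
    have "(F has_integral (\<Sum>k<m. G k (\<gamma> (t (Suc k))) - G k (\<gamma> (t k))) + (G m (\<gamma> (t (Suc m))) - G m (\<gamma> (t m)))) {0..t (Suc m)}"
      using has_integral_combine[OF _ _ Suc.IH piece[OF m]] tk[OF m] Suc.prems by auto
    then show ?case by simp
  qed
  have whole: "(F has_integral (\<Sum>k<N. G k (\<gamma> (t (Suc k))) - G k (\<gamma> (t k)))) {0..1}"
    using comb[of N] N by (simp add: t_def)
  define E where "E = (\<lambda>k. G k (\<gamma> (t k)) - G k (c k))"
  have seg: "contour_integral (linepath (c k) (c (Suc k))) (\<lambda>u. f u / h k u) = G k (c (Suc k)) - G k (c k)"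
    if k: "k < N" for k
  proof -
    have "closed_segment (c k) (c (Suc k)) \<subseteq> ball (c k) R"
      using cnext[OF k] Rpos by (intro closed_segment_subset) auto
    then have "((\<lambda>u. f u / h k u) has_contour_integral (G k (c (Suc k)) - G k (c k))) (linepath (c k) (c (Suc k)))"
      using contour_integral_primitive[of "ball (c k) R" "G k" "\<lambda>u. f u / h k u" "linepath (c k) (c (Suc k))"]
        G[of k] k by (auto simp: has_field_derivative_at_within)
    then show ?thesis by (rule contour_integral_unique)
  qed
  have step: "G k (\<gamma> (t (Suc k))) - G k (\<gamma> (t k)) = (G k (c (Suc k)) - G k (c k)) + (E (Suc k) - E k)"
    if k: "k < N" for k
  proof -
    have g1: "\<gamma> (t (Suc k)) \<in> ball (c k) R" using inb[OF k, of "t (Suc k)"] tk[OF k] by (auto simp: t_def)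
    have g2: "\<gamma> (t (Suc k)) \<in> ball (c (Suc k)) R"
    proof (cases "Suc k < N")
      case True then show ?thesis using inb[OF True, of "t (Suc k)"] tk[OF True] by (auto simp: t_def)
    next
      case False then have "Suc k = N" using k by auto
      then show ?thesis using inb[OF N, of 0] closed cN N by (auto simp: t_def)
    qed
    have c1: "c (Suc k) \<in> ball (c k) R" using cnext k by auto
    have c2: "c (Suc k) \<in> ball (c (Suc k)) R" using Rpos by auto
    have "G k (\<gamma> (t (Suc k))) - G k (c (Suc k)) = G (Suc k) (\<gamma> (t (Suc k))) - G (Suc k) (c (Suc k))"
    proof (rule prim_diff[where S="ball (c k) R \<inter> ball (c (Suc k)) R" and F="\<lambda>u. f u / h k u"])
      show "convex (ball (c k) R \<inter> ball (c (Suc k)) R)" by (simp add: convex_Int)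
      show "\<And>u. u \<in> ball (c k) R \<inter> ball (c (Suc k)) R \<Longrightarrow> (G k has_field_derivative f u / h k u) (at u)"
        using G k by auto
      show "\<And>u. u \<in> ball (c k) R \<inter> ball (c (Suc k)) R \<Longrightarrow> (G (Suc k) has_field_derivative f u / h k u) (at u)"
        using G[of "Suc k"] k hagree[OF k] by auto
    qed (use g1 g2 c1 c2 in auto)
    then show ?thesis unfolding E_def by (simp add: algebra_simps)
  qed
  have EN: "E N = E 0"
  proof -
    have "G N (\<gamma> 1) - G N (c 0) = G 0 (\<gamma> 1) - G 0 (c 0)"
    proof (rule prim_diff[where S="ball (c 0) R" and F="\<lambda>u. f u / h 0 u"])
      show "\<And>u. u \<in> ball (c 0) R \<Longrightarrow> (G N has_field_derivative f u / h 0 u) (at u)"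
        using G[of N] cN hN by auto
      show "\<And>u. u \<in> ball (c 0) R \<Longrightarrow> (G 0 has_field_derivative f u / h 0 u) (at u)"
        using G[of 0] by auto
      show "\<gamma> 1 \<in> ball (c 0) R" using inb[OF N, of 0] closed by (auto simp: t_def)
    qed (use Rpos in auto)
    then show ?thesis unfolding E_def t_def using N cN closed by auto
  qed
  have "(\<Sum>k<N. G k (\<gamma> (t (Suc k))) - G k (\<gamma> (t k)))
        = (\<Sum>k<N. (G k (c (Suc k)) - G k (c k)) + (E (Suc k) - E k))"
    by (rule sum.cong[OF refl], rule step) simp
  also have "\<dots> = (\<Sum>k<N. G k (c (Suc k)) - G k (c k)) + (E N - E 0)"
    by (simp add: sum.distrib sum_lessThan_telescope)
  also have "\<dots> = (\<Sum>k<N. contour_integral (linepath (c k) (c (Suc k))) (\<lambda>u. f u / h k u))"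
  proof -
    have "(\<Sum>k<N. G k (c (Suc k)) - G k (c k)) = (\<Sum>k<N. contour_integral (linepath (c k) (c (Suc k))) (\<lambda>u. f u / h k u))"
      by (rule sum.cong[OF refl], rule seg[symmetric]) simp
    then show ?thesis using EN by simp
  qed
  finally show ?thesis using whole unfolding F_def by simp
qed

definition br :: "complex \<Rightarrow> complex \<Rightarrow> complex \<Rightarrow> complex \<Rightarrow> complex \<Rightarrow> complex" where
  "br c A x0 x u = A * csqrt (u / c) * csqrt ((u - 1) / (c - 1)) * csqrt ((u - x) / (c - x0))"

lemma br_sq:
  assumes "A^2 = c * (c - 1) * (c - x0)" "c \<noteq> 0" "c \<noteq> 1" "c \<noteq> x0"
  shows "(br c A x0 x u)^2 = u * (u - 1) * (u - x)"
proof -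
  have "(br c A x0 x u)^2 = A^2 * (u / c) * ((u - 1) / (c - 1)) * ((u - x) / (c - x0))"
    unfolding br_def by (simp add: power_mult_distrib)
  also have "\<dots> = (c * (c - 1) * (c - x0)) * (u / c) * ((u - 1) / (c - 1)) * ((u - x) / (c - x0))"
    using assms(1) by simp
  also have "\<dots> = u * (u - 1) * (u - x)"
  proof -
    have "c - 1 \<noteq> 0" "c - x0 \<noteq> 0" using assms by auto
    then have 1: "c * (u / c) = u" "(c - 1) * ((u - 1) / (c - 1)) = u - 1" "(c - x0) * ((u - x) / (c - x0)) = u - x"
      using assms(2) by simp_all
    have "(c * (c - 1) * (c - x0)) * (u / c) * ((u - 1) / (c - 1)) * ((u - x) / (c - x0))
       = (c * (u / c)) * ((c - 1) * ((u - 1) / (c - 1))) * ((c - x0) * ((u - x) / (c - x0)))"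
      by (simp only: ac_simps)
    then show ?thesis using 1 by simp
  qed
  finally show ?thesis .
qed

lemma br_nz:
  assumes "A \<noteq> 0" "u \<noteq> 0" "u \<noteq> 1" "u \<noteq> x" "c \<noteq> 0" "c \<noteq> 1" "c \<noteq> x0"
  shows "br c A x0 x u \<noteq> 0"
  using assms unfolding br_def by auto

lemma br_base: "br c A x0 x0 c = A" if "c \<noteq> 0" "c \<noteq> 1" "c \<noteq> x0"
  using that unfolding br_def by simp

lemma br_deriv_u:
  assumes r1: "u / c \<notin> \<real>\<^sub>\<le>\<^sub>0" and r2: "(u - 1) / (c - 1) \<notin> \<real>\<^sub>\<le>\<^sub>0" and r3: "(u - x) / (c - x0) \<notin> \<real>\<^sub>\<le>\<^sub>0"
  shows "(br c A x0 x has_field_derivative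
           br c A x0 x u * (1 / (2 * u) + 1 / (2 * (u - 1)) + 1 / (2 * (u - x)))) (at u)"
proof -
  have nz: "u / c \<noteq> 0" "(u - 1) / (c - 1) \<noteq> 0" "(u - x) / (c - x0) \<noteq> 0" using r1 r2 r3 by auto
  then have nz2: "u \<noteq> 0" "c \<noteq> 0" "u - 1 \<noteq> 0" "c - 1 \<noteq> 0" "u - x \<noteq> 0" "c - x0 \<noteq> 0" by auto
  define s1 where "s1 = csqrt (u / c)"
  define s2 where "s2 = csqrt ((u - 1) / (c - 1))"
  define s3 where "s3 = csqrt ((u - x) / (c - x0))"
  have s1: "s1^2 = u / c" "s1 \<noteq> 0" unfolding s1_def using nz by auto
  have s2: "s2^2 = (u - 1) / (c - 1)" "s2 \<noteq> 0" unfolding s2_def using nz by auto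
  have s3: "s3^2 = (u - x) / (c - x0)" "s3 \<noteq> 0" unfolding s3_def using nz by auto
  have d: "(br c A x0 x has_field_derivative
      A * ((1/c) / (2 * s1)) * s2 * s3 + A * s1 * ((1/(c-1)) / (2 * s2)) * s3 + A * s1 * s2 * ((1/(c-x0)) / (2 * s3))) (at u)"
  proof -
    have q1: "((\<lambda>u. u / c) has_field_derivative 1 / c) (at u)"
      using DERIV_cdivide[OF DERIV_ident, of c u] by simp
    have q2: "((\<lambda>u. (u - 1) / (c - 1)) has_field_derivative 1 / (c - 1)) (at u)"
      using nz2 by (auto intro!: derivative_eq_intros)
    have q3: "((\<lambda>u. (u - x) / (c - x0)) has_field_derivative 1 / (c - x0)) (at u)"
      using nz2 by (auto intro!: derivative_eq_intros)
    note d1 = has_field_derivative_csqrt'[OF q1 r1]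
    note d2 = has_field_derivative_csqrt'[OF q2 r2]
    note d3 = has_field_derivative_csqrt'[OF q3 r3]
    have "((\<lambda>u. A * csqrt (u / c) * csqrt ((u - 1) / (c - 1)) * csqrt ((u - x) / (c - x0))) has_field_derivative
      A * ((1/c) / (2 * s1)) * s2 * s3 + A * s1 * ((1/(c-1)) / (2 * s2)) * s3 + A * s1 * s2 * ((1/(c-x0)) / (2 * s3))) (at u)"
      using DERIV_mult[OF DERIV_mult[OF DERIV_cmult[OF d1, of A] d2] d3]
      unfolding s1_def s2_def s3_def by (simp add: algebra_simps)
    then show ?thesis unfolding br_def[abs_def] by simp
  qed
  have e1: "(1/c) / (2 * s1) = s1 * (1 / (2 * u))" using s1 nz2 by (simp add: field_simps power2_eq_square)
  have e2: "(1/(c-1)) / (2 * s2) = s2 * (1 / (2 * (u - 1)))" using s2 nz2 by (simp add: field_simps power2_eq_square) algebra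
  have e3: "(1/(c-x0)) / (2 * s3) = s3 * (1 / (2 * (u - x)))" using s3 nz2 by (simp add: field_simps power2_eq_square) algebra
  show ?thesis using d unfolding e1 e2 e3 br_def s1_def[symmetric] s2_def[symmetric] s3_def[symmetric]
    by (simp add: algebra_simps)
qed

lemma br_deriv_x:
  assumes r3: "(u - x) / (c - x0) \<notin> \<real>\<^sub>\<le>\<^sub>0"
  shows "((\<lambda>x. br c A x0 x u) has_field_derivative - br c A x0 x u / (2 * (u - x))) (at x)"
proof -
  have nz: "(u - x) / (c - x0) \<noteq> 0" using r3 by auto
  then have nz2: "u - x \<noteq> 0" "c - x0 \<noteq> 0" by auto
  define s3 where "s3 = csqrt ((u - x) / (c - x0))"
  have s3: "s3^2 = (u - x) / (c - x0)" "s3 \<noteq> 0" unfolding s3_def using nz by auto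
  have d: "((\<lambda>x. br c A x0 x u) has_field_derivative
      A * csqrt (u / c) * csqrt ((u - 1) / (c - 1)) * ((- 1/(c-x0)) / (2 * s3))) (at x)"
  proof -
    have q3: "((\<lambda>x. (u - x) / (c - x0)) has_field_derivative - 1 / (c - x0)) (at x)"
      by (rule DERIV_cdivide) (auto intro!: derivative_eq_intros)
    note d3 = has_field_derivative_csqrt'[OF q3 r3]
    show ?thesis
      using DERIV_cmult[OF d3, of "A * csqrt (u / c) * csqrt ((u - 1) / (c - 1))"]
      unfolding br_def s3_def by (simp add: algebra_simps)
  qed
  have e3: "(- 1/(c-x0)) / (2 * s3) = - s3 / (2 * (u - x))" using s3 nz2 by (simp add: field_simps power2_eq_square) algebra
  show ?thesis using d unfolding e3 br_def s3_def[symmetric]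
    by (simp add: algebra_simps)
qed

lemma continuous_on_csqrt_comp:
  assumes "continuous_on S f" "\<And>x. x \<in> S \<Longrightarrow> f x \<notin> \<real>\<^sub>\<le>\<^sub>0"
  shows "continuous_on S (\<lambda>x. csqrt (f x))"
  by (rule continuous_on_compose2[OF continuous_on_csqrt assms(1)]) (use assms(2) in auto)

definition segdata :: "(nat \<Rightarrow> complex) \<Rightarrow> (nat \<Rightarrow> complex) \<Rightarrow> complex \<Rightarrow> nat \<Rightarrow> real \<Rightarrow> bool" where
  "segdata c A x0 N \<rho> \<longleftrightarrow> \<rho> > 0 \<and>
     (\<forall>k\<le>N. 4*\<rho> < norm (c k) \<and> 4*\<rho> < norm (c k - 1) \<and> 4*\<rho> < norm (c k - x0) \<and>
        (A k)^2 = c k * (c k - 1) * (c k - x0)) \<and>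
     (\<forall>k<N. norm (c (Suc k) - c k) < \<rho>)"

lemma segdata_ratios:
  assumes sd: "segdata c A x0 N \<rho>" and k: "k \<le> N" and u: "u \<in> ball (c k) (3*\<rho>)" and x: "dist x x0 < \<rho>"
  shows "u / c k \<notin> \<real>\<^sub>\<le>\<^sub>0" "(u - 1) / (c k - 1) \<notin> \<real>\<^sub>\<le>\<^sub>0" "(u - x) / (c k - x0) \<notin> \<real>\<^sub>\<le>\<^sub>0"
    "u \<noteq> 0" "u \<noteq> 1" "u \<noteq> x" "c k \<noteq> 0" "c k \<noteq> 1" "c k \<noteq> x0" "A k \<noteq> 0"
proof -
  have r: "\<rho> > 0" and ck: "4*\<rho> < norm (c k)" "4*\<rho> < norm (c k - 1)" "4*\<rho> < norm (c k - x0)"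
    and Ak: "(A k)^2 = c k * (c k - 1) * (c k - x0)"
    using sd k unfolding segdata_def by auto
  have uc: "norm (u - c k) < 3*\<rho>" using u by (simp add: dist_norm norm_minus_commute)
  have xx: "norm (x - x0) < \<rho>" using x by (simp add: dist_norm)
  have 1: "norm (u - c k) < norm (c k)" using uc ck r by linarith
  have 2: "norm ((u - 1) - (c k - 1)) < norm (c k - 1)" using uc ck r by simp
  have e: "(u - x) - (c k - x0) = (u - c k) + (x0 - x)" by simp
  have "norm ((u - x) - (c k - x0)) \<le> norm (u - c k) + norm (x0 - x)"
    unfolding e by (rule norm_triangle_ineq)
  then have "norm ((u - x) - (c k - x0)) \<le> norm (u - c k) + norm (x - x0)"
    by (simp add: norm_minus_commute)
  then have 3: "norm ((u - x) - (c k - x0)) < norm (c k - x0)" using uc xx ck by linarith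
  show "u / c k \<notin> \<real>\<^sub>\<le>\<^sub>0" by (rule near1_not_nonpos[OF ratio_near1[OF 1]])
  show "(u - 1) / (c k - 1) \<notin> \<real>\<^sub>\<le>\<^sub>0" by (rule near1_not_nonpos[OF ratio_near1[OF 2]])
  show "(u - x) / (c k - x0) \<notin> \<real>\<^sub>\<le>\<^sub>0" by (rule near1_not_nonpos[OF ratio_near1[OF 3]])
  show "u \<noteq> 0" using 1 by auto
  show "u \<noteq> 1" using 2 by (auto simp: norm_minus_commute)
  show "u \<noteq> x" using 3 by (auto simp: norm_minus_commute)
  show "c k \<noteq> 0" "c k \<noteq> 1" "c k \<noteq> x0" using ck r by auto
  then show "A k \<noteq> 0" using Ak by auto
qed

lemma segdata_seg:
  assumes sd: "segdata c A x0 N \<rho>" and k: "k < N"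
  shows "closed_segment (c k) (c (Suc k)) \<subseteq> ball (c k) (3*\<rho>)"
proof -
  have "norm (c (Suc k) - c k) < \<rho>" "\<rho> > 0" using sd k unfolding segdata_def by auto
  then have "c (Suc k) \<in> ball (c k) (3*\<rho>)" by (simp add: dist_norm norm_minus_commute)
  moreover have "c k \<in> ball (c k) (3*\<rho>)" using \<open>\<rho> > 0\<close> by simp
  ultimately show ?thesis by (intro closed_segment_subset) auto
qed

lemma segdata_br_deriv:
  assumes sd: "segdata c A x0 N \<rho>" and k: "k \<le> N" and u: "u \<in> ball (c k) (3*\<rho>)" and x: "dist x x0 < \<rho>"
  shows "(br (c k) (A k) x0 x has_field_derivative
           br (c k) (A k) x0 x u * (1 / (2 * u) + 1 / (2 * (u - 1)) + 1 / (2 * (u - x)))) (at u)"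
  using br_deriv_u segdata_ratios[OF assms] by blast

lemma segdata_br_cont:
  assumes sd: "segdata c A x0 N \<rho>" and k: "k \<le> N" and x: "dist x x0 < \<rho>"
  shows "continuous_on (ball (c k) (3*\<rho>)) (br (c k) (A k) x0 x)"
proof (rule continuous_at_imp_continuous_on, rule ballI)
  fix u assume "u \<in> ball (c k) (3*\<rho>)"
  from segdata_br_deriv[OF sd k this x] show "isCont (br (c k) (A k) x0 x) u" by (rule DERIV_isCont)
qed

lemma segdata_br_nz:
  assumes sd: "segdata c A x0 N \<rho>" and k: "k \<le> N" and u: "u \<in> ball (c k) (3*\<rho>)" and x: "dist x x0 < \<rho>"
  shows "br (c k) (A k) x0 x u \<noteq> 0"
  using br_nz segdata_ratios[OF assms] by blast

definition Sg :: "(nat \<Rightarrow> complex) \<Rightarrow> (nat \<Rightarrow> complex) \<Rightarrow> complex \<Rightarrow> nat \<Rightarrow> (complex \<Rightarrow> complex) \<Rightarrow> complex \<Rightarrow> complex" where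
  "Sg c A x0 N F x = (\<Sum>k<N. contour_integral (linepath (c k) (c (Suc k))) (\<lambda>u. F u / br (c k) (A k) x0 x u))"

lemma segdata_integrable:
  assumes sd: "segdata c A x0 N \<rho>" and k: "k < N" and x: "dist x x0 < \<rho>"
    and F: "continuous_on (ball (c k) (3*\<rho>)) F"
  shows "(\<lambda>u. F u / br (c k) (A k) x0 x u) contour_integrable_on linepath (c k) (c (Suc k))"
proof (rule contour_integrable_continuous_linepath)
  have "continuous_on (ball (c k) (3*\<rho>)) (\<lambda>u. F u / br (c k) (A k) x0 x u)"
    using F segdata_br_cont[OF sd _ x, of k] segdata_br_nz[OF sd _ _ x, of k] k
    by (intro continuous_intros) auto
  then show "continuous_on (closed_segment (c k) (c (Suc k))) (\<lambda>u. F u / br (c k) (A k) x0 x u)"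
    using segdata_seg[OF sd k] continuous_on_subset by blast
qed

lemma Sg_lin3:
  assumes sd: "segdata c A x0 N \<rho>" and x: "dist x x0 < \<rho>"
    and F: "\<And>k. k \<le> N \<Longrightarrow> continuous_on (ball (c k) (3*\<rho>)) F"
    and G: "\<And>k. k \<le> N \<Longrightarrow> continuous_on (ball (c k) (3*\<rho>)) G"
    and H: "\<And>k. k \<le> N \<Longrightarrow> continuous_on (ball (c k) (3*\<rho>)) H"
    and eq: "\<And>k u. k \<le> N \<Longrightarrow> u \<in> ball (c k) (3*\<rho>) \<Longrightarrow> K u = a * F u + b * G u + d * H u"
  shows "Sg c A x0 N K x = a * Sg c A x0 N F x + b * Sg c A x0 N G x + d * Sg c A x0 N H x"
proof -
  have "contour_integral (linepath (c k) (c (Suc k))) (\<lambda>u. K u / br (c k) (A k) x0 x u)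
     = a * contour_integral (linepath (c k) (c (Suc k))) (\<lambda>u. F u / br (c k) (A k) x0 x u)
     + b * contour_integral (linepath (c k) (c (Suc k))) (\<lambda>u. G u / br (c k) (A k) x0 x u)
     + d * contour_integral (linepath (c k) (c (Suc k))) (\<lambda>u. H u / br (c k) (A k) x0 x u)" if k: "k < N" for k
  proof -
    let ?g = "linepath (c k) (c (Suc k))"
    let ?b = "br (c k) (A k) x0 x"
    have iF: "(\<lambda>u. F u / ?b u) contour_integrable_on ?g" using segdata_integrable[OF sd k x F] k by auto
    have iG: "(\<lambda>u. G u / ?b u) contour_integrable_on ?g" using segdata_integrable[OF sd k x G] k by auto
    have iH: "(\<lambda>u. H u / ?b u) contour_integrable_on ?g" using segdata_integrable[OF sd k x H] k by auto
    have "contour_integral ?g (\<lambda>u. K u / ?b u) = contour_integral ?g (\<lambda>u. a * (F u / ?b u) + b * (G u / ?b u) + d * (H u / ?b u))"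
    proof (rule contour_integral_eq)
      fix u assume "u \<in> path_image ?g"
      then have "u \<in> ball (c k) (3*\<rho>)" using segdata_seg[OF sd k] by auto
      then have "K u = a * F u + b * G u + d * H u" using eq[of k u] k by auto
      then show "K u / ?b u = a * (F u / ?b u) + b * (G u / ?b u) + d * (H u / ?b u)"
        by (simp add: add_divide_distrib)
    qed
    also have "\<dots> = a * contour_integral ?g (\<lambda>u. F u / ?b u) + b * contour_integral ?g (\<lambda>u. G u / ?b u) + d * contour_integral ?g (\<lambda>u. H u / ?b u)"
      by (intro contour_integral_unique has_contour_integral_add has_contour_integral_lmul has_contour_integral_integral iF iG iH)
    finally show ?thesis .
  qed
  then show ?thesis unfolding Sg_def
    by (simp add: sum.distrib sum_distrib_left)
qed

lemma Sg_exact: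
  assumes sd: "segdata c A x0 N \<rho>" and x: "dist x x0 < \<rho>" and cN: "c N = c 0" and AN: "A N = A 0"
    and agree: "\<And>k. k < N \<Longrightarrow> br (c k) (A k) x0 x (c (Suc k)) = br (c (Suc k)) (A (Suc k)) x0 x (c (Suc k))"
  shows "Sg c A x0 N (\<lambda>u. 1/u + 1/(u-1) + 1/(u-x)) x = 0"
proof -
  define w where "w = (\<lambda>k. -2 * inverse (br (c k) (A k) x0 x (c k)))"
  have seg: "contour_integral (linepath (c k) (c (Suc k))) (\<lambda>u. (1/u + 1/(u-1) + 1/(u-x)) / br (c k) (A k) x0 x u)
      = w (Suc k) - w k" if k: "k < N" for k
  proof -
    let ?b = "br (c k) (A k) x0 x"
    have der: "((\<lambda>u. -2 * inverse (?b u)) has_field_derivative (1/u + 1/(u-1) + 1/(u-x)) / ?b u) (at u within ball (c k) (3*\<rho>))"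
      if u: "u \<in> ball (c k) (3*\<rho>)" for u
    proof -
      have nz: "?b u \<noteq> 0" using segdata_br_nz[OF sd _ u x] k by auto
      have "((\<lambda>u. -2 * inverse (?b u)) has_field_derivative
             -2 * (- (?b u * (1 / (2 * u) + 1 / (2 * (u - 1)) + 1 / (2 * (u - x))) * inverse (?b u ^ Suc (Suc 0))))) (at u)"
        by (rule DERIV_cmult, rule DERIV_inverse_fun[OF segdata_br_deriv[OF sd _ u x] nz]) (use k in auto)
      then show ?thesis
      proof (rule DERIV_cong[THEN has_field_derivative_at_within])
        show "-2 * (- (?b u * (1 / (2 * u) + 1 / (2 * (u - 1)) + 1 / (2 * (u - x))) * inverse (?b u ^ Suc (Suc 0))))
            = (1/u + 1/(u-1) + 1/(u-x)) / ?b u"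
        proof -
          have h: "1 / (2 * u) + 1 / (2 * (u - 1)) + 1 / (2 * (u - x)) = (1/u + 1/(u-1) + 1/(u-x)) / 2"
            by (simp add: add_divide_distrib divide_divide_eq_left mult.commute)
          have g: "-2 * (- (B * (S / 2) * inverse (B ^ Suc (Suc 0)))) = S / B" if "B \<noteq> 0" for B S :: complex
            using that by (simp add: field_simps power2_eq_square)
          show ?thesis unfolding h using g[OF nz] .
        qed
      qed
    qed
    have "((\<lambda>u. (1/u + 1/(u-1) + 1/(u-x)) / ?b u) has_contour_integral
            ((-2 * inverse (?b (c (Suc k)))) - (-2 * inverse (?b (c k))))) (linepath (c k) (c (Suc k)))"
      using contour_integral_primitive[of "ball (c k) (3*\<rho>)" "\<lambda>u. -2 * inverse (?b u)"
          "\<lambda>u. (1/u + 1/(u-1) + 1/(u-x)) / ?b u" "linepath (c k) (c (Suc k))"] der segdata_seg[OF sd k]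
      by simp
    then have "contour_integral (linepath (c k) (c (Suc k))) (\<lambda>u. (1/u + 1/(u-1) + 1/(u-x)) / ?b u)
         = (-2 * inverse (?b (c (Suc k)))) - (-2 * inverse (?b (c k)))"
      by (rule contour_integral_unique)
    then show ?thesis unfolding w_def using agree[OF k] by simp
  qed
  have "Sg c A x0 N (\<lambda>u. 1/u + 1/(u-1) + 1/(u-x)) x = (\<Sum>k<N. w (Suc k) - w k)"
    unfolding Sg_def by (rule sum.cong[OF refl], rule seg) simp
  also have "\<dots> = w N - w 0" by (rule sum_lessThan_telescope)
  also have "\<dots> = 0" unfolding w_def using cN AN by simp
  finally show ?thesis .
qed

lemma Sg_deriv:
  assumes sd: "segdata c A x0 N \<rho>" and x1: "dist x1 x0 < \<rho>"
    and F: "\<And>k. k \<le> N \<Longrightarrow> continuous_on (ball (c k) (3*\<rho>)) F"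
  shows "((\<lambda>x. Sg c A x0 N F x) has_field_derivative Sg c A x0 N (\<lambda>u. F u / (2 * (u - x1))) x1) (at x1)"
proof -
  define U where "U = ball x0 \<rho>"
  have x1U: "x1 \<in> U" using x1 by (simp add: U_def dist_commute)
  have xU: "dist x x0 < \<rho>" if "x \<in> U" for x using that by (simp add: U_def dist_commute)
  have rep: "contour_integral (linepath a b) G = integral (cbox 0 1) (\<lambda>s. G (linepath a b s) * (b - a))" for a b G
    by (simp add: contour_integral_integral)
  have one: "((\<lambda>x. integral (cbox 0 1) (\<lambda>s. F (linepath (c k) (c (Suc k)) s) / br (c k) (A k) x0 x (linepath (c k) (c (Suc k)) s) * (c (Suc k) - c k)))
     has_field_derivative integral (cbox 0 1) (\<lambda>s. F (linepath (c k) (c (Suc k)) s) / (2 * (linepath (c k) (c (Suc k)) s - x1)) / br (c k) (A k) x0 x1 (linepath (c k) (c (Suc k)) s) * (c (Suc k) - c k))) (at x1 within U)"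
    if k: "k < N" for k
  proof -
    define lp where "lp = linepath (c k) (c (Suc k))"
    define Dl where "Dl = c (Suc k) - c k"
    have lin: "lp s \<in> ball (c k) (3*\<rho>)" if "s \<in> cbox 0 1" for s
    proof -
      have "s \<in> {0..1}" using that by simp
      then have "lp s \<in> closed_segment (c k) (c (Suc k))" unfolding lp_def by (rule linepath_in_path)
      then show ?thesis using segdata_seg[OF sd k] by auto
    qed
    have kN: "k \<le> N" using k by simp
    show ?thesis unfolding lp_def[symmetric] Dl_def[symmetric]
    proof (rule leibniz_rule_field_derivative[where fx="\<lambda>x s. F (lp s) / (2 * (lp s - x)) / br (c k) (A k) x0 x (lp s) * Dl"])
      fix x s assume x: "x \<in> U" and s: "s \<in> cbox (0::real) 1"
      let ?u = "lp s"
      have r: "(?u - x) / (c k - x0) \<notin> \<real>\<^sub>\<le>\<^sub>0" "?u \<noteq> x" using segdata_ratios[OF sd kN lin[OF s] xU[OF x]] by auto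
      have nz: "br (c k) (A k) x0 x ?u \<noteq> 0" using segdata_br_nz[OF sd kN lin[OF s] xU[OF x]] .
      have d: "((\<lambda>x. (F ?u * Dl) * inverse (br (c k) (A k) x0 x ?u)) has_field_derivative
          (F ?u * Dl) * (- ((- br (c k) (A k) x0 x ?u / (2 * (?u - x))) * inverse (br (c k) (A k) x0 x ?u ^ Suc (Suc 0))))) (at x)"
        by (rule DERIV_cmult, rule DERIV_inverse_fun[OF br_deriv_x[OF r(1)] nz])
      have e: "(F ?u * Dl) * (- ((- br (c k) (A k) x0 x ?u / (2 * (?u - x))) * inverse (br (c k) (A k) x0 x ?u ^ Suc (Suc 0))))
          = F ?u / (2 * (?u - x)) / br (c k) (A k) x0 x ?u * Dl"
      proof -
        have "?u - x \<noteq> 0" using r by auto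
        then show ?thesis using nz by (simp add: field_simps power2_eq_square)
      qed
      have f: "(\<lambda>x. F ?u / br (c k) (A k) x0 x ?u * Dl) = (\<lambda>x. (F ?u * Dl) * inverse (br (c k) (A k) x0 x ?u))"
        by (simp add: divide_inverse ac_simps)
      show "((\<lambda>x. F ?u / br (c k) (A k) x0 x ?u * Dl) has_field_derivative
             F ?u / (2 * (?u - x)) / br (c k) (A k) x0 x ?u * Dl) (at x within U)"
        unfolding f using d e by (simp add: has_field_derivative_at_within)
    next
      fix x assume x: "x \<in> U"
      have "continuous_on (ball (c k) (3*\<rho>)) (\<lambda>u. F u / br (c k) (A k) x0 x u * Dl)"
        using F[OF kN] segdata_br_cont[OF sd kN xU[OF x]] segdata_br_nz[OF sd kN _ xU[OF x]]
        by (intro continuous_intros) auto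
      moreover have "continuous_on (cbox 0 1) lp" unfolding lp_def by (rule continuous_on_linepath)
      ultimately have "continuous_on (cbox 0 1) (\<lambda>s. F (lp s) / br (c k) (A k) x0 x (lp s) * Dl)"
        by (rule continuous_on_compose2) (use lin in auto)
      then show "(\<lambda>s. F (lp s) / br (c k) (A k) x0 x (lp s) * Dl) integrable_on cbox 0 1"
        by (rule integrable_continuous)
    next
      have clp: "continuous_on (U \<times> cbox 0 1) (\<lambda>p. lp (snd p))"
        unfolding lp_def by (rule continuous_on_compose2[OF continuous_on_linepath[of UNIV]]) (auto intro: continuous_intros)
      have cF: "continuous_on (U \<times> cbox 0 1) (\<lambda>p. F (lp (snd p)))"
        by (rule continuous_on_compose2[OF F[OF kN] clp]) (use lin in \<open>auto simp: mem_Times_iff\<close>)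
      have r: "lp (snd p) / c k \<notin> \<real>\<^sub>\<le>\<^sub>0" "(lp (snd p) - 1) / (c k - 1) \<notin> \<real>\<^sub>\<le>\<^sub>0"
          "(lp (snd p) - fst p) / (c k - x0) \<notin> \<real>\<^sub>\<le>\<^sub>0" "lp (snd p) \<noteq> fst p"
          "br (c k) (A k) x0 (fst p) (lp (snd p)) \<noteq> 0" "c k \<noteq> 0" "c k - 1 \<noteq> 0" "c k - x0 \<noteq> 0"
        if "p \<in> U \<times> cbox 0 1" for p
        using segdata_ratios[OF sd kN lin xU, of "snd p" "fst p"] segdata_br_nz[OF sd kN lin xU, of "snd p" "fst p"] that
        by (auto simp: mem_Times_iff)
      let ?W = "U \<times> cbox (0::real) 1"
      have s1: "continuous_on ?W (\<lambda>p. csqrt (lp (snd p) / c k))"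
        by (rule continuous_on_csqrt_comp) (intro continuous_intros clp, use r in auto)
      have s2: "continuous_on ?W (\<lambda>p. csqrt ((lp (snd p) - 1) / (c k - 1)))"
        by (rule continuous_on_csqrt_comp) (intro continuous_intros clp, use r in auto)
      have s3: "continuous_on ?W (\<lambda>p. csqrt ((lp (snd p) - fst p) / (c k - x0)))"
        by (rule continuous_on_csqrt_comp) (intro continuous_intros clp, use r in auto)
      have bb: "continuous_on ?W (\<lambda>p. br (c k) (A k) x0 (fst p) (lp (snd p)))"
        unfolding br_def by (intro continuous_intros s1 s2 s3)
      have "continuous_on ?W (\<lambda>p. F (lp (snd p)) / (2 * (lp (snd p) - fst p)) / br (c k) (A k) x0 (fst p) (lp (snd p)) * Dl)"
        by (intro continuous_intros cF bb clp) (use r in auto)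
      then show "continuous_on (U \<times> cbox 0 1) (\<lambda>(x, s). F (lp s) / (2 * (lp s - x)) / br (c k) (A k) x0 x (lp s) * Dl)"
        unfolding case_prod_unfold .
    qed (use x1U in \<open>auto simp: U_def\<close>)
  qed
  have "((\<lambda>x. \<Sum>k<N. integral (cbox 0 1) (\<lambda>s. F (linepath (c k) (c (Suc k)) s) / br (c k) (A k) x0 x (linepath (c k) (c (Suc k)) s) * (c (Suc k) - c k)))
     has_field_derivative (\<Sum>k<N. integral (cbox 0 1) (\<lambda>s. F (linepath (c k) (c (Suc k)) s) / (2 * (linepath (c k) (c (Suc k)) s - x1)) / br (c k) (A k) x0 x1 (linepath (c k) (c (Suc k)) s) * (c (Suc k) - c k)))) (at x1 within U)"
    by (rule DERIV_sum) (use one in auto)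
  then have "((\<lambda>x. Sg c A x0 N F x) has_field_derivative Sg c A x0 N (\<lambda>u. F u / (2 * (u - x1))) x1) (at x1 within U)"
    unfolding Sg_def rep by simp
  then show ?thesis using at_within_open[OF x1U] by (simp add: U_def)
qed

lemma fam_facts:
  assumes "lifted_cycle_family U g v" "x \<in> U"
  shows "valid_path (g x)" "g x 1 = g x 0" "v x 1 = v x 0"
    "\<And>t. t \<in> {0..1} \<Longrightarrow> g x t \<noteq> 0 \<and> g x t \<noteq> 1 \<and> g x t \<noteq> x \<and> (v x t)^2 = g x t * (g x t - 1) * (g x t - x)"
  using assms unfolding lifted_cycle_family_def pathfinish_def pathstart_def by auto

lemma fam_cont:
  assumes "lifted_cycle_family U g v"
  shows "continuous_on (U \<times> {0..1}) (\<lambda>p. g (fst p) (snd p))" "continuous_on (U \<times> {0..1}) (\<lambda>p. v (fst p) (snd p))"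
  using assms unfolding lifted_cycle_family_def case_prod_unfold by auto

lemma fam_setup:
  assumes U: "open U" and fam: "lifted_cycle_family U g v" and x0: "x0 \<in> U"
  obtains \<rho> N r where "segdata (\<lambda>k. g x0 (real k / real N)) (\<lambda>k. v x0 (real k / real N)) x0 N \<rho>"
    "N > 0" "0 < r" "r \<le> \<rho>" "ball x0 r \<subseteq> U"
    "\<And>x t. x \<in> ball x0 r \<Longrightarrow> t \<in> {0..1} \<Longrightarrow> norm (g x t - g x0 t) < \<rho>"
    "\<And>k s. k < N \<Longrightarrow> s \<in> {real k / real N .. real (Suc k) / real N} \<Longrightarrow> norm (g x0 s - g x0 (real k / real N)) < \<rho>"
proof -
  note ff = fam_facts[OF fam x0]
  have cg0: "continuous_on {0..1} (g x0)"
    using ff(1) unfolding valid_path_def piecewise_C1_differentiable_on_def by auto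
  define m where "m = (\<lambda>t. min (norm (g x0 t)) (min (norm (g x0 t - 1)) (norm (g x0 t - x0))))"
  have cm: "continuous_on {0..1} m" unfolding m_def by (intro continuous_intros cg0)
  obtain ts where ts: "ts \<in> {0..1}" "\<And>t. t \<in> {0..1} \<Longrightarrow> m ts \<le> m t"
    using continuous_attains_inf[OF compact_Icc _ cm] by auto
  have mpos: "m ts > 0" using ff(4)[OF ts(1)] unfolding m_def by auto
  define \<rho> where "\<rho> = m ts / 5"
  have rho: "\<rho> > 0" using mpos by (simp add: \<rho>_def)
  have far: "4*\<rho> < norm (g x0 t)" "4*\<rho> < norm (g x0 t - 1)" "4*\<rho> < norm (g x0 t - x0)" if "t \<in> {0..1}" for t
  proof -
    have "m t \<le> norm (g x0 t)" "m t \<le> norm (g x0 t - 1)" "m t \<le> norm (g x0 t - x0)" unfolding m_def by auto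
    then show "4*\<rho> < norm (g x0 t)" "4*\<rho> < norm (g x0 t - 1)" "4*\<rho> < norm (g x0 t - x0)"
      using ts(2)[OF that] mpos unfolding \<rho>_def by linarith+
  qed
  have "uniformly_continuous_on {0..1} (g x0)" by (rule compact_uniformly_continuous[OF cg0 compact_Icc])
  then obtain d where d: "d > 0" "\<And>s t. s \<in> {0..1} \<Longrightarrow> t \<in> {0..1} \<Longrightarrow> dist s t < d \<Longrightarrow> dist (g x0 s) (g x0 t) < \<rho>"
    unfolding uniformly_continuous_on_def using rho by metis
  obtain N :: nat where N: "1 / d < real N" using reals_Archimedean2 by blast
  have Npos: "N > 0" using N d by (auto intro: ccontr)
  have Nd: "1 / real N < d" using N d Npos by (simp add: divide_simps mult.commute)
  have piece: "norm (g x0 s - g x0 (real k / real N)) < \<rho>"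
    if k: "k < N" and s: "s \<in> {real k / real N .. real (Suc k) / real N}" for k s
  proof -
    have a: "0 \<le> real k / real N" by simp
    have b: "real (Suc k) / real N \<le> 1" using k Npos by (simp add: divide_simps)
    have "0 \<le> s" using a s by (meson atLeastAtMost_iff order_trans)
    moreover have "s \<le> 1" using b s by (meson atLeastAtMost_iff order_trans)
    ultimately have s01: "s \<in> {0..1}" by auto
    have k01: "real k / real N \<in> {0..1}" using k Npos by (auto simp: divide_simps)
    have "dist s (real k / real N) \<le> real (Suc k) / real N - real k / real N"
      using s by (auto simp: dist_real_def)
    also have "\<dots> = 1 / real N" by (simp add: diff_divide_distrib[symmetric])
    finally have "dist s (real k / real N) < d" using Nd by linarith
    then show ?thesis using d(2)[OF s01 k01] by (simp add: dist_norm)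
  qed
  obtain r0 where r0: "r0 > 0" "cball x0 r0 \<subseteq> U" using U x0 open_contains_cball by blast
  have "uniformly_continuous_on (cball x0 r0 \<times> {0..1}) (\<lambda>p. g (fst p) (snd p))"
    by (rule compact_uniformly_continuous[OF continuous_on_subset[OF fam_cont(1)[OF fam]]])
       (use r0 in \<open>auto intro: compact_Times\<close>)
  then obtain d2 where d2: "d2 > 0" "\<And>p q. p \<in> cball x0 r0 \<times> {0..1} \<Longrightarrow> q \<in> cball x0 r0 \<times> {0..1} \<Longrightarrow>
        dist p q < d2 \<Longrightarrow> dist (g (fst p) (snd p)) (g (fst q) (snd q)) < \<rho>"
    unfolding uniformly_continuous_on_def using rho by metis
  define r where "r = min (min r0 d2) \<rho>"
  have r: "0 < r" "r \<le> \<rho>" using r0 d2 rho by (auto simp: r_def)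
  have bU: "ball x0 r \<subseteq> U" using r0 by (auto simp: r_def)
  have close: "norm (g x t - g x0 t) < \<rho>" if x: "x \<in> ball x0 r" and t: "t \<in> {0..1}" for x t
  proof -
    have "(x, t) \<in> cball x0 r0 \<times> {0..1}" "(x0, t) \<in> cball x0 r0 \<times> {0..1}"
      using x t r0 by (auto simp: r_def)
    moreover have "dist (x, t) (x0, t) < d2" using x by (simp add: dist_Pair_Pair r_def dist_commute)
    ultimately show ?thesis using d2(2) by (fastforce simp: dist_norm)
  qed
  have sd: "segdata (\<lambda>k. g x0 (real k / real N)) (\<lambda>k. v x0 (real k / real N)) x0 N \<rho>"
    unfolding segdata_def
  proof (intro conjI allI impI rho)
    fix k assume k: "k \<le> N"
    have k01: "real k / real N \<in> {0..1}" using k Npos by (auto simp: divide_simps)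
    show "4 * \<rho> < cmod (g x0 (real k / real N))" "4 * \<rho> < cmod (g x0 (real k / real N) - 1)"
      "4 * \<rho> < cmod (g x0 (real k / real N) - x0)" using far[OF k01] by auto
    show "(v x0 (real k / real N))\<^sup>2 = g x0 (real k / real N) * (g x0 (real k / real N) - 1) * (g x0 (real k / real N) - x0)"
      using ff(4)[OF k01] by auto
  next
    fix k assume k: "k < N"
    have "real (Suc k) / real N \<in> {real k / real N .. real (Suc k) / real N}"
      using Npos by (auto simp: divide_simps)
    then show "cmod (g x0 (real (Suc k) / real N) - g x0 (real k / real N)) < \<rho>" by (rule piece[OF k])
  qed
  show ?thesis by (rule that[OF sd Npos r bU close piece])
qed

lemma piece_01: "k < N \<Longrightarrow> s \<in> {real k / real N .. real (Suc k) / real N} \<Longrightarrow> s \<in> {0..1}"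
proof -
  assume k: "k < N" and s: "s \<in> {real k / real N .. real (Suc k) / real N}"
  have a: "0 \<le> real k / real N" by simp
  have b: "real (Suc k) / real N \<le> 1" using k by (simp add: divide_simps)
  have "0 \<le> s" using a s by (meson atLeastAtMost_iff order_trans)
  moreover have "s \<le> 1" using b s by (meson atLeastAtMost_iff order_trans)
  ultimately show ?thesis by auto
qed

lemma br_holo:
  assumes sd: "segdata c A x0 N \<rho>" and k: "k \<le> N" and x: "dist x x0 < \<rho>"
  shows "br (c k) (A k) x0 x holomorphic_on ball (c k) (3*\<rho>)"
proof -
  have "\<forall>u\<in>ball (c k) (3*\<rho>). \<exists>f'. (br (c k) (A k) x0 x has_field_derivative f') (at u)"
    using segdata_br_deriv[OF sd k _ x] by blast
  then show ?thesis by (simp add: holomorphic_on_open)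
qed

locale famloc =
  fixes U g v x0 c A N \<rho> r
  assumes fam: "lifted_cycle_family U g v" and x0: "x0 \<in> U"
    and sd: "segdata c A x0 N \<rho>"
    and cdef: "c = (\<lambda>k. g x0 (real k / real N))" and Adef: "A = (\<lambda>k. v x0 (real k / real N))"
    and Npos: "N > 0" and r: "0 < r" "r \<le> \<rho>" and bU: "ball x0 r \<subseteq> U"
    and close: "\<And>x t. x \<in> ball x0 r \<Longrightarrow> t \<in> {0..1} \<Longrightarrow> norm (g x t - g x0 t) < \<rho>"
    and piece: "\<And>k s. k < N \<Longrightarrow> s \<in> {real k / real N .. real (Suc k) / real N} \<Longrightarrow> norm (g x0 s - g x0 (real k / real N)) < \<rho>"
begin

lemma xdist: "x \<in> ball x0 r \<Longrightarrow> dist x x0 < \<rho>"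
  using r by (simp add: dist_commute)

lemma inb1: "x \<in> ball x0 r \<Longrightarrow> k < N \<Longrightarrow> s \<in> {real k / real N .. real (Suc k) / real N} \<Longrightarrow> g x s \<in> ball (c k) (3*\<rho>)"
proof -
  assume x: "x \<in> ball x0 r" and k: "k < N" and s: "s \<in> {real k / real N .. real (Suc k) / real N}"
  have "norm (g x s - c k) \<le> norm (g x s - g x0 s) + norm (g x0 s - c k)"
    by (metis diff_add_cancel norm_triangle_ineq add_diff_eq)
  also have "\<dots> < \<rho> + \<rho>" using close[OF x piece_01[OF k s]] piece[OF k s] cdef by (intro add_strict_mono) auto
  finally show ?thesis using sd unfolding segdata_def by (simp add: dist_norm norm_minus_commute)
qed

lemma inb2: "x \<in> ball x0 r \<Longrightarrow> k < N \<Longrightarrow> s \<in> {real k / real N .. real (Suc k) / real N} \<Longrightarrow> v x s = br (c k) (A k) x0 x (g x s)"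
proof -
  assume x: "x \<in> ball x0 r" and k: "k < N" and s: "s \<in> {real k / real N .. real (Suc k) / real N}"
  define S where "S = ball x0 r \<times> {real k / real N .. real (Suc k) / real N}"
  have SU: "S \<subseteq> U \<times> {0..1}" using bU piece_01[OF k] unfolding S_def by auto
  have kN: "k \<le> N" using k by simp
  have inS: "fst p \<in> ball x0 r" "snd p \<in> {real k / real N .. real (Suc k) / real N}" if "p \<in> S" for p
    using that unfolding S_def by auto
  have cg: "continuous_on S (\<lambda>p. g (fst p) (snd p))" by (rule continuous_on_subset[OF fam_cont(1)[OF fam] SU])
  have rat: "g (fst p) (snd p) / c k \<notin> \<real>\<^sub>\<le>\<^sub>0" "(g (fst p) (snd p) - 1) / (c k - 1) \<notin> \<real>\<^sub>\<le>\<^sub>0"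
      "(g (fst p) (snd p) - fst p) / (c k - x0) \<notin> \<real>\<^sub>\<le>\<^sub>0" if "p \<in> S" for p
    using segdata_ratios[OF sd kN inb1[OF inS(1)[OF that] k inS(2)[OF that]] xdist[OF inS(1)[OF that]]] by auto
  have s1: "continuous_on S (\<lambda>p. csqrt (g (fst p) (snd p) / c k))"
    by (rule continuous_on_csqrt_comp) (intro continuous_intros cg, use rat in auto)
  have s2: "continuous_on S (\<lambda>p. csqrt ((g (fst p) (snd p) - 1) / (c k - 1)))"
    by (rule continuous_on_csqrt_comp) (intro continuous_intros cg, use rat in auto)
  have s3: "continuous_on S (\<lambda>p. csqrt ((g (fst p) (snd p) - fst p) / (c k - x0)))"
    by (rule continuous_on_csqrt_comp) (intro continuous_intros cg, use rat in auto)
  have cb: "continuous_on S (\<lambda>p. br (c k) (A k) x0 (fst p) (g (fst p) (snd p)))"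
    unfolding br_def by (intro continuous_intros s1 s2 s3)
  have ck: "c k \<noteq> 0" "c k \<noteq> 1" "c k \<noteq> x0" "(A k)^2 = c k * (c k - 1) * (c k - x0)"
    using sd kN unfolding segdata_def by auto
  have conn: "connected S" unfolding S_def by (intro convex_connected convex_Times convex_ball convex_real_interval)
  have cv: "continuous_on S (\<lambda>p. v (fst p) (snd p))" by (rule continuous_on_subset[OF fam_cont(2)[OF fam] SU])
  have sq: "(v (fst p) (snd p))^2 = (br (c k) (A k) x0 (fst p) (g (fst p) (snd p)))^2" if p: "p \<in> S" for p
  proof -
    have pU: "fst p \<in> U" "snd p \<in> {0..1}" using p SU by auto
    show ?thesis using fam_facts(4)[OF fam pU(1) pU(2)] br_sq[OF ck(4) ck(1-3)] by simp
  qed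
  have nz: "br (c k) (A k) x0 (fst p) (g (fst p) (snd p)) \<noteq> 0" if p: "p \<in> S" for p
    using segdata_br_nz[OF sd kN inb1[OF inS(1)[OF p] k inS(2)[OF p]] xdist[OF inS(1)[OF p]]] .
  have z0S: "(x0, real k / real N) \<in> S" using r Npos k unfolding S_def by (auto simp: divide_simps)
  have zS: "(x, s) \<in> S" using x s unfolding S_def by auto
  have e0: "v (fst (x0, real k / real N)) (snd (x0, real k / real N)) =
          br (c k) (A k) x0 (fst (x0, real k / real N)) (g (fst (x0, real k / real N)) (snd (x0, real k / real N)))"
    using br_base[OF ck(1-3), of "A k"] cdef Adef by simp
  have "v (fst (x, s)) (snd (x, s)) = br (c k) (A k) x0 (fst (x, s)) (g (fst (x, s)) (snd (x, s)))"
    by (rule sqrt_branch_eq[where f="\<lambda>p. v (fst p) (snd p)" and g="\<lambda>p. br (c k) (A k) x0 (fst p) (g (fst p) (snd p))",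
          OF conn cv cb sq nz z0S e0 zS])
  then show ?thesis by simp
qed

end

context famloc begin

lemma xU: "x \<in> ball x0 r \<Longrightarrow> x \<in> U" using bU by auto

lemma cN: "c N = c 0" and AN: "A N = A 0"
  using fam_facts(2,3)[OF fam x0] Npos cdef Adef by auto

lemma hagree:
  assumes x: "x \<in> ball x0 r" and k: "k < N" and u: "u \<in> ball (c k) (3*\<rho>) \<inter> ball (c (Suc k)) (3*\<rho>)"
  shows "br (c k) (A k) x0 x u = br (c (Suc k)) (A (Suc k)) x0 x u"
proof -
  define z0 where "z0 = g x (real (Suc k) / real N)"
  have sk: "real (Suc k) / real N \<in> {real k / real N .. real (Suc k) / real N}"
    using Npos by (auto simp: divide_simps)
  have z0k: "z0 \<in> ball (c k) (3*\<rho>)" unfolding z0_def by (rule inb1[OF x k sk])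
  have vk: "v x (real (Suc k) / real N) = br (c k) (A k) x0 x z0" unfolding z0_def by (rule inb2[OF x k sk])
  have z0k1: "z0 \<in> ball (c (Suc k)) (3*\<rho>) \<and> v x (real (Suc k) / real N) = br (c (Suc k)) (A (Suc k)) x0 x z0"
  proof (cases "Suc k < N")
    case True
    have sk1: "real (Suc k) / real N \<in> {real (Suc k) / real N .. real (Suc (Suc k)) / real N}"
      using Npos by (auto simp: divide_simps)
    show ?thesis unfolding z0_def using inb1[OF x True sk1] inb2[OF x True sk1] by auto
  next
    case False
    then have kN: "Suc k = N" using k by auto
    have s0: "(0::real) \<in> {real 0 / real N .. real (Suc 0) / real N}" by simp
    have e: "real (Suc k) / real N = 1" using kN Npos by simp
    have "g x 1 = g x 0" "v x 1 = v x 0" using fam_facts(2,3)[OF fam xU[OF x]] by auto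
    then show ?thesis unfolding z0_def e using inb1[OF x Npos s0] inb2[OF x Npos s0] kN cN AN by auto
  qed
  define S where "S = ball (c k) (3*\<rho>) \<inter> ball (c (Suc k)) (3*\<rho>)"
  have kN: "k \<le> N" "Suc k \<le> N" using k by auto
  have ck: "c j \<noteq> 0" "c j \<noteq> 1" "c j \<noteq> x0" "(A j)^2 = c j * (c j - 1) * (c j - x0)" if "j \<le> N" for j
    using sd that unfolding segdata_def by auto
  have conn: "connected S" unfolding S_def by (intro convex_connected convex_Int convex_ball)
  have c1: "continuous_on S (br (c k) (A k) x0 x)"
    using segdata_br_cont[OF sd kN(1) xdist[OF x]] unfolding S_def by (rule continuous_on_subset) auto
  have c2: "continuous_on S (br (c (Suc k)) (A (Suc k)) x0 x)"
    using segdata_br_cont[OF sd kN(2) xdist[OF x]] unfolding S_def by (rule continuous_on_subset) auto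
  have sq: "(br (c k) (A k) x0 x w)^2 = (br (c (Suc k)) (A (Suc k)) x0 x w)^2" for w
    using br_sq[OF ck(4)[OF kN(1)] ck(1-3)[OF kN(1)]] br_sq[OF ck(4)[OF kN(2)] ck(1-3)[OF kN(2)]] by simp
  have nz: "br (c (Suc k)) (A (Suc k)) x0 x w \<noteq> 0" if "w \<in> S" for w
    using segdata_br_nz[OF sd kN(2) _ xdist[OF x]] that unfolding S_def by auto
  have z0S: "z0 \<in> S" using z0k z0k1 unfolding S_def by auto
  have e0: "br (c k) (A k) x0 x z0 = br (c (Suc k)) (A (Suc k)) x0 x z0" using vk z0k1 by auto
  show ?thesis by (rule sqrt_branch_eq[OF conn c1 c2 sq nz z0S e0]) (use u in \<open>auto simp: S_def\<close>)
qed

lemma period_eq: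
  assumes x: "x \<in> ball x0 r" and F: "\<And>k. k \<le> N \<Longrightarrow> F holomorphic_on ball (c k) (3*\<rho>)"
  shows "curve_period F (g x) (v x) = Sg c A x0 N F x"
proof -
  have "((\<lambda>t. F (g x t) / v x t * vector_derivative (g x) (at t within {0..1})) has_integral
           (\<Sum>k<N. contour_integral (linepath (c k) (c (Suc k))) (\<lambda>u. F u / br (c k) (A k) x0 x u))) {0..1}"
  proof (rule poly_period[where h="\<lambda>k. br (c k) (A k) x0 x"])
    show "valid_path (g x)" "g x 1 = g x 0" using fam_facts(1,2)[OF fam xU[OF x]] by auto
    show "N > 0" by (rule Npos)
    show "(\<lambda>u. F u / br (c k) (A k) x0 x u) holomorphic_on ball (c k) (3 * \<rho>)" if k: "k \<le> N" for k
      using F[OF k] br_holo[OF sd k xdist[OF x]] segdata_br_nz[OF sd k _ xdist[OF x]]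
      by (intro holomorphic_intros) auto
    show "g x s \<in> ball (c k) (3 * \<rho>) \<and> v x s = br (c k) (A k) x0 x (g x s)"
      if "k < N" "s \<in> {real k / real N..real (Suc k) / real N}" for k s
      using inb1[OF x that] inb2[OF x that] by auto
    show "c (Suc k) \<in> ball (c k) (3 * \<rho>)" if "k < N" for k
      using sd that unfolding segdata_def by (auto simp: dist_norm norm_minus_commute)
    show "br (c k) (A k) x0 x u = br (c (Suc k)) (A (Suc k)) x0 x u"
      if "k < N" "u \<in> ball (c k) (3 * \<rho>) \<inter> ball (c (Suc k)) (3 * \<rho>)" for k u
      by (rule hagree[OF x that])
    show "c N = c 0" by (rule cN)
    show "br (c N) (A N) x0 x = br (c 0) (A 0) x0 x" using cN AN by simp
  qed
  then show ?thesis unfolding curve_period_def Sg_def by (rule integral_unique)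
qed

end

context famloc begin

lemma x0ball: "x0 \<in> ball x0 r" using r by simp

lemma ball_facts: "k \<le> N \<Longrightarrow> u \<in> ball (c k) (3*\<rho>) \<Longrightarrow> u \<noteq> 0 \<and> u \<noteq> 1 \<and> u \<noteq> x0"
  using segdata_ratios[OF sd _ _ xdist[OF x0ball]] by blast

lemma holo_F1: "k \<le> N \<Longrightarrow> (\<lambda>u. 1 / u) holomorphic_on ball (c k) (3*\<rho>)"
  using ball_facts by (intro holomorphic_intros) auto
lemma holo_F2: "k \<le> N \<Longrightarrow> (\<lambda>u. 1 / (u - 1)) holomorphic_on ball (c k) (3*\<rho>)"
  using ball_facts by (intro holomorphic_intros) auto
lemma cont_F1: "k \<le> N \<Longrightarrow> continuous_on (ball (c k) (3*\<rho>)) (\<lambda>u. 1 / u)"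
  using ball_facts by (intro continuous_intros) auto
lemma cont_F2: "k \<le> N \<Longrightarrow> continuous_on (ball (c k) (3*\<rho>)) (\<lambda>u. 1 / (u - 1))"
  using ball_facts by (intro continuous_intros) auto
lemma cont_E: "k \<le> N \<Longrightarrow> continuous_on (ball (c k) (3*\<rho>)) (\<lambda>u. 1/u + 1/(u-1) + 1/(u-x0))"
  using ball_facts by (intro continuous_intros) auto

lemma exact0: "Sg c A x0 N (\<lambda>u. 1/u + 1/(u-1) + 1/(u-x0)) x0 = 0"
proof (rule Sg_exact[OF sd _ cN AN])
  show "dist x0 x0 < \<rho>" using sd unfolding segdata_def by auto
  fix k assume k: "k < N"
  have "c (Suc k) \<in> ball (c k) (3 * \<rho>) \<inter> ball (c (Suc k)) (3 * \<rho>)"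
    using sd k unfolding segdata_def by (auto simp: dist_norm norm_minus_commute)
  then show "br (c k) (A k) x0 x0 (c (Suc k)) = br (c (Suc k)) (A (Suc k)) x0 x0 (c (Suc k))"
    by (rule hagree[OF x0ball k])
qed

lemma deriv_periods:
  assumes nz: "x0 \<noteq> 0" "x0 \<noteq> 1"
  defines "p1 \<equiv> \<lambda>x. curve_period (\<lambda>u. 1 / u) (g x) (v x)"
    and "p2 \<equiv> \<lambda>x. curve_period (\<lambda>u. 1 / (u - 1)) (g x) (v x)"
  shows "(p1 has_field_derivative (-2 * p1 x0 - p2 x0) / (2 * x0)) (at x0)"
    and "(p2 has_field_derivative (p1 x0 + 2 * p2 x0) / (2 * (1 - x0))) (at x0)"
proof -
  have dx0: "dist x0 x0 < \<rho>" using sd unfolding segdata_def by auto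
  let ?S1 = "Sg c A x0 N (\<lambda>u. 1 / u)"
  let ?S2 = "Sg c A x0 N (\<lambda>u. 1 / (u - 1))"
  let ?SE = "Sg c A x0 N (\<lambda>u. 1/u + 1/(u-1) + 1/(u-x0))"
  have eq1: "p1 x = ?S1 x" if "x \<in> ball x0 r" for x unfolding p1_def by (rule period_eq[OF that holo_F1])
  have eq2: "p2 x = ?S2 x" if "x \<in> ball x0 r" for x unfolding p2_def by (rule period_eq[OF that holo_F2])
  have d1: "(?S1 has_field_derivative Sg c A x0 N (\<lambda>u. 1 / u / (2 * (u - x0))) x0) (at x0)"
    by (rule Sg_deriv[OF sd dx0 cont_F1])
  have d2: "(?S2 has_field_derivative Sg c A x0 N (\<lambda>u. 1 / (u - 1) / (2 * (u - x0))) x0) (at x0)"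
    by (rule Sg_deriv[OF sd dx0 cont_F2])
  have l1: "Sg c A x0 N (\<lambda>u. 1 / u / (2 * (u - x0))) x0
      = (- 1 / x0) * ?S1 x0 + (- 1 / (2 * x0)) * ?S2 x0 + (1 / (2 * x0)) * ?SE x0"
  proof (rule Sg_lin3[OF sd dx0 cont_F1 cont_F2 cont_E])
    fix k u assume "k \<le> N" "u \<in> ball (c k) (3*\<rho>)"
    then have "u \<noteq> 0" "u - 1 \<noteq> 0" "u - x0 \<noteq> 0" using ball_facts by auto
    then show "1 / u / (2 * (u - x0)) = - 1 / x0 * (1 / u) + - 1 / (2 * x0) * (1 / (u - 1)) + 1 / (2 * x0) * (1 / u + 1 / (u - 1) + 1 / (u - x0))"
      using nz by (simp add: divide_simps) (simp add: algebra_simps)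
  qed
  have l2: "Sg c A x0 N (\<lambda>u. 1 / (u - 1) / (2 * (u - x0))) x0
      = (1 / (2 * (1 - x0))) * ?S1 x0 + (1 / (1 - x0)) * ?S2 x0 + (- 1 / (2 * (1 - x0))) * ?SE x0"
  proof (rule Sg_lin3[OF sd dx0 cont_F1 cont_F2 cont_E])
    fix k u assume "k \<le> N" "u \<in> ball (c k) (3*\<rho>)"
    then have "u \<noteq> 0" "u - 1 \<noteq> 0" "u - x0 \<noteq> 0" using ball_facts by auto
    moreover have "1 - x0 \<noteq> 0" using nz by auto
    ultimately show "1 / (u - 1) / (2 * (u - x0)) = 1 / (2 * (1 - x0)) * (1 / u) + 1 / (1 - x0) * (1 / (u - 1)) + - 1 / (2 * (1 - x0)) * (1 / u + 1 / (u - 1) + 1 / (u - x0))"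
      using nz by (simp add: divide_simps) (simp add: algebra_simps)
  qed
  have v1: "Sg c A x0 N (\<lambda>u. 1 / u / (2 * (u - x0))) x0 = (-2 * p1 x0 - p2 x0) / (2 * x0)"
    unfolding l1 exact0 eq1[OF x0ball] eq2[OF x0ball] using nz by (simp add: field_simps)
  have v2: "Sg c A x0 N (\<lambda>u. 1 / (u - 1) / (2 * (u - x0))) x0 = (p1 x0 + 2 * p2 x0) / (2 * (1 - x0))"
  proof -
    have "1 - x0 \<noteq> 0" using nz by auto
    then show ?thesis unfolding l2 exact0 eq1[OF x0ball] eq2[OF x0ball] by (simp add: divide_simps) (simp add: algebra_simps)
  qed
  show "(p1 has_field_derivative (-2 * p1 x0 - p2 x0) / (2 * x0)) (at x0)"
    using has_field_derivative_transform_within_open[OF d1 open_ball x0ball, of p1] eq1 v1 by auto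
  show "(p2 has_field_derivative (p1 x0 + 2 * p2 x0) / (2 * (1 - x0))) (at x0)"
    using has_field_derivative_transform_within_open[OF d2 open_ball x0ball, of p2] eq2 v2 by auto
qed

end

lemma period_derivs:
  assumes U: "open U" and fam: "lifted_cycle_family U g v" and x0: "x0 \<in> U" and nz: "x0 \<noteq> 0" "x0 \<noteq> 1"
  shows "((\<lambda>x. curve_period (\<lambda>u. 1 / u) (g x) (v x)) has_field_derivative
           (-2 * curve_period (\<lambda>u. 1 / u) (g x0) (v x0) - curve_period (\<lambda>u. 1 / (u - 1)) (g x0) (v x0)) / (2 * x0)) (at x0)"
    and "((\<lambda>x. curve_period (\<lambda>u. 1 / (u - 1)) (g x) (v x)) has_field_derivative
           (curve_period (\<lambda>u. 1 / u) (g x0) (v x0) + 2 * curve_period (\<lambda>u. 1 / (u - 1)) (g x0) (v x0)) / (2 * (1 - x0))) (at x0)"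
proof -
  have "((\<lambda>x. curve_period (\<lambda>u. 1 / u) (g x) (v x)) has_field_derivative
           (-2 * curve_period (\<lambda>u. 1 / u) (g x0) (v x0) - curve_period (\<lambda>u. 1 / (u - 1)) (g x0) (v x0)) / (2 * x0)) (at x0) \<and>
       ((\<lambda>x. curve_period (\<lambda>u. 1 / (u - 1)) (g x) (v x)) has_field_derivative
           (curve_period (\<lambda>u. 1 / u) (g x0) (v x0) + 2 * curve_period (\<lambda>u. 1 / (u - 1)) (g x0) (v x0)) / (2 * (1 - x0))) (at x0)"
  proof (rule fam_setup[OF U fam x0])
    fix N \<rho> r
    assume sd: "segdata (\<lambda>k. g x0 (real k / real N)) (\<lambda>k. v x0 (real k / real N)) x0 N \<rho>"
      and rest: "N > 0" "0 < r" "r \<le> \<rho>" "ball x0 r \<subseteq> U"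
      "\<And>x t. x \<in> ball x0 r \<Longrightarrow> t \<in> {0..1} \<Longrightarrow> norm (g x t - g x0 t) < \<rho>"
      "\<And>k s. k < N \<Longrightarrow> s \<in> {real k / real N .. real (Suc k) / real N} \<Longrightarrow> norm (g x0 s - g x0 (real k / real N)) < \<rho>"
    interpret F: famloc U g v x0 "\<lambda>k. g x0 (real k / real N)" "\<lambda>k. v x0 (real k / real N)" N \<rho> r
      by (unfold_locales) (use fam x0 sd rest in auto)
    show ?thesis using F.deriv_periods[OF nz] by blast
  qed
  then show "((\<lambda>x. curve_period (\<lambda>u. 1 / u) (g x) (v x)) has_field_derivative
           (-2 * curve_period (\<lambda>u. 1 / u) (g x0) (v x0) - curve_period (\<lambda>u. 1 / (u - 1)) (g x0) (v x0)) / (2 * x0)) (at x0)"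
   "((\<lambda>x. curve_period (\<lambda>u. 1 / (u - 1)) (g x) (v x)) has_field_derivative
           (curve_period (\<lambda>u. 1 / u) (g x0) (v x0) + 2 * curve_period (\<lambda>u. 1 / (u - 1)) (g x0) (v x0)) / (2 * (1 - x0))) (at x0)"
    by auto
qed

lemma poly_id:
  fixes p q x :: complex
  shows "4*p*q*((1 - x) * p + x * q)*((q*q*x*x-p*p*(1-x)^2)*(p - q)+(p*p*(1-x) + q*q*x)*((1 - x) * p + x * q))
   = (q*((1 - x) * p + x * q)+p*((1 - x) * p + x * q)+p*q)*(p*p*(1-x) + q*q*x)^2 - 4*p*q*(-(2*x-1)*((1 - x) * p + x * q)+(x * (1 - x))*(p - q))*(p*p*(1-x) + q*q*x)*(p - q) + (p*p*q*q*((1 - x) * p + x * q)*((1 - x) * p + x * q) - q*q*((1 - x) * p + x * q)*((1 - x) * p + x * q)*x*(p - q)*(p - q) - p*p*((1 - x) * p + x * q)*((1 - x) * p + x * q)*(1-x)*(p - q)*(p - q) - 3*p*p*q*q*(x * (1 - x))*(p - q)*(p - q))"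
  by (simp add: algebra_simps power2_eq_square)

lemma stepB:
  fixes p q s D m w x :: complex
  assumes n: "p \<noteq> 0" "q \<noteq> 0" "s \<noteq> 0" "D \<noteq> 0" "w \<noteq> 0" "x \<noteq> 0"
  shows "1/2 * (D/p + D/q + D/s) * (m / (2 * w * D^2))\<^sup>2
            - (- (2*x-1)/w + D/s) * (m / (2 * w * D^2))
            + (p/D) * (q/D) * (s/D) / w\<^sup>2
              * (1/8 + (-1/8) * x / (p/D)\<^sup>2 + 1/8 * (x - 1) / (q/D)\<^sup>2 + 3/8 * (-w) / (s/D)\<^sup>2)
   = ((q* s+p* s+p*q)*m^2 - 4*p*q*(-(2*x-1)* s+w*D)*m*D + (p*p*q*q* s* s - q*q* s* s*x*D*D - p*p* s* s*(1-x)*D*D - 3*p*p*q*q*w*D*D))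
      / (8 * w^2 * D^3 * (p*q* s))"
proof -
  let ?den = "8 * w^2 * D^3 * (p*q* s)"
  have den: "?den \<noteq> 0" using n by simp
  have t1: "1/2 * (D/p + D/q + D/s) * (m / (2 * w * D^2))\<^sup>2 = ((q* s+p* s+p*q)*m^2) / ?den"
    using n by (simp add: field_simps power2_eq_square power3_eq_cube)
  have t2: "(- (2*x-1)/w + D/s) * (m / (2 * w * D^2)) = (4*p*q*(-(2*x-1)* s+w*D)*m*D) / ?den"
    using n by (simp add: field_simps power2_eq_square power3_eq_cube)
  have t3: "(p/D) * (q/D) * (s/D) / w\<^sup>2 * (1/8 + (-1/8) * x / (p/D)\<^sup>2 + 1/8 * (x - 1) / (q/D)\<^sup>2 + 3/8 * (-w) / (s/D)\<^sup>2)
      = (p*p*q*q* s* s - q*q* s* s*x*D*D - p*p* s* s*(1-x)*D*D - 3*p*p*q*q*w*D*D) / ?den"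
    using n by (simp add: field_simps power2_eq_square power3_eq_cube)
  show ?thesis unfolding t1 t2 t3 by (simp add: diff_divide_distrib add_divide_distrib)
qed


lemma pvi_alg:
  fixes x a1 a2 :: complex
  assumes x: "x \<noteq> 0" "x \<noteq> 1" and Dn: "x * a1 + (x - 1) * a2 \<noteq> 0"
    and a: "a1 \<noteq> 0" "a2 \<noteq> 0" "a1 + a2 \<noteq> 0"
    and Y: "Y = x * a1 / (x * a1 + (x - 1) * a2)"
    and Y1: "Y1 = (x * a1^2 + (1 - x) * a2^2) / (2 * (x * a1 + (x - 1) * a2)^2)"
    and Y2: "Y2 = ((a2^2 - a1^2) * (x * a1 + (x - 1) * a2) + (x * a1^2 + (1 - x) * a2^2) * (a1 + a2)) / (2 * (x * a1 + (x - 1) * a2)^3)"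
  shows "Y2 = 1/2 * (1/Y + 1/(Y - 1) + 1/(Y - x)) * Y1\<^sup>2
            - (1/x + 1/(x - 1) + 1/(Y - x)) * Y1
            + Y * (Y - 1) * (Y - x) / (x\<^sup>2 * (x - 1)\<^sup>2)
              * (1/8 + (-1/8) * x / Y\<^sup>2 + 1/8 * (x - 1) / (Y - 1)\<^sup>2 + 3/8 * x * (x - 1) / (Y - x)\<^sup>2)"
proof -
  define D where "D = x * a1 + (x - 1) * a2"
  define p where "p = x * a1"
  define q where "q = (1 - x) * a2"
  define s where "s = (1 - x) * p + x * q"
  define w where "w = x * (1 - x)"
  define m where "m = p*p*(1-x) + q*q*x"
  have x1: "1 - x \<noteq> 0" "x - 1 \<noteq> 0" using x by auto
  have Dn': "D \<noteq> 0" using Dn by (simp add: D_def)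
  have Dpq: "D = p - q" unfolding D_def p_def q_def by (simp add: algebra_simps)
  have sa: "s = x * (1 - x) * (a1 + a2)" unfolding s_def p_def q_def by (simp add: algebra_simps)
  have nz: "p \<noteq> 0" "q \<noteq> 0" "s \<noteq> 0" "w \<noteq> 0" using x x1 a unfolding p_def q_def w_def sa by auto
  have eY: "Y = p / D" unfolding Y p_def D_def ..
  have eY1: "Y - 1 = q / D" using Dn' unfolding eY Dpq by (simp add: field_simps)
  have eYx: "Y - x = s / D" using Dn' unfolding eY Dpq s_def by (simp add: field_simps)
  have h1a: "1/Y = D/p" by (subst eY) simp
  have h1b: "1/(Y-1) = D/q" by (subst eY1) simp
  have h1c: "1/(Y-x) = D/s" by (subst eYx) simp
  note h1 = h1a h1b h1c
  have h4: "Y * (Y - 1) * (Y - x) = (p/D) * (q/D) * (s/D)" by (subst eY1, subst eYx, subst eY, simp)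
  have h5a: "Y\<^sup>2 = (p/D)\<^sup>2" by (subst eY) simp
  have h5b: "(Y - 1)\<^sup>2 = (q/D)\<^sup>2" by (subst eY1) simp
  have h5c: "(Y - x)\<^sup>2 = (s/D)\<^sup>2" by (subst eYx) simp
  note h5 = h5a h5b h5c
  have h8: "x\<^sup>2 * (x - 1)\<^sup>2 = w\<^sup>2" unfolding w_def by (simp add: algebra_simps power2_eq_square)
  have h9: "3/8 * x * (x - 1) = 3/8 * (-w)" unfolding w_def by (simp add: algebra_simps)
  have h10: "1/x + 1/(x - 1) = - (2*x-1)/w" using x x1 unfolding w_def by (simp add: field_simps)
  have eM: "x * a1^2 + (1 - x) * a2^2 = m / w"
    using x x1 unfolding m_def w_def p_def q_def by (simp add: field_simps power2_eq_square)
  have eY1': "Y1 = m / (2 * w * D^2)" unfolding Y1 eM D_def[symmetric] using nz by (simp add: field_simps)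
  have eA2: "a2^2 - a1^2 = (q*q*x*x - p*p*(1-x)^2) / w^2"
  proof -
    have "q*q*x*x - p*p*(1-x)^2 = (a2^2 - a1^2) * w^2"
      unfolding w_def p_def q_def by (simp add: algebra_simps power2_eq_square)
    then show ?thesis using nz(4) by simp
  qed
  have eA3: "a1 + a2 = s / w" using nz unfolding sa w_def by simp
  have eY2: "Y2 = (4*p*q* s*((q*q*x*x-p*p*(1-x)^2)*D+m* s)) / (8 * w^2 * D^3 * (p*q* s))"
    unfolding Y2 D_def[symmetric] eM eA2 eA3 using nz Dn' by (simp add: field_simps power2_eq_square power3_eq_cube)
  have R: "1/2 * (1/Y + 1/(Y - 1) + 1/(Y - x)) * Y1\<^sup>2
            - (1/x + 1/(x - 1) + 1/(Y - x)) * Y1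
            + Y * (Y - 1) * (Y - x) / (x\<^sup>2 * (x - 1)\<^sup>2)
              * (1/8 + (-1/8) * x / Y\<^sup>2 + 1/8 * (x - 1) / (Y - 1)\<^sup>2 + 3/8 * x * (x - 1) / (Y - x)\<^sup>2)
     = ((q* s+p* s+p*q)*m^2 - 4*p*q*(-(2*x-1)* s+w*D)*m*D + (p*p*q*q* s* s - q*q* s* s*x*D*D - p*p* s* s*(1-x)*D*D - 3*p*p*q*q*w*D*D))
      / (8 * w^2 * D^3 * (p*q* s))"
    unfolding h1 h4 h5 h8 h9 h10 eY1' by (rule stepB[OF nz(1-3) Dn' nz(4) x(1)])
  have P: "4*p*q* s*((q*q*x*x-p*p*(1-x)^2)*D+m* s)
      = (q* s+p* s+p*q)*m^2 - 4*p*q*(-(2*x-1)* s+w*D)*m*D + (p*p*q*q* s* s - q*q* s* s*x*D*D - p*p* s* s*(1-x)*D*D - 3*p*p*q*q*w*D*D)"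
    unfolding Dpq s_def m_def w_def by (rule poly_id)
  show ?thesis unfolding R eY2 P ..
qed


lemma alg_y1':
  fixes x a1 a2 :: complex
  assumes x: "x \<noteq> 0" "x \<noteq> 1" and Dn: "x * a1 + (x - 1) * a2 \<noteq> 0"
  defines "A1 \<equiv> (-2 * a1 - a2) / (2 * x)" and "A2 \<equiv> (a1 + 2 * a2) / (2 * (1 - x))"
  shows "((1 * a1 + A1 * x) * (x * a1 + (x - 1) * a2) - x * a1 * ((1 * a1 + A1 * x) + ((1 - 0) * a2 + A2 * (x - 1))))
         / ((x * a1 + (x - 1) * a2) * (x * a1 + (x - 1) * a2))
       = (x * (a1 * a1) + (1 - x) * (a2 * a2)) / (2 * ((x * a1 + (x - 1) * a2) * (x * a1 + (x - 1) * a2)))"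
proof -
  have x1: "1 - x \<noteq> 0" using x by auto
  have e1: "1 * a1 + A1 * x = - a2 / 2" using x unfolding A1_def by (simp add: field_simps)
  have e2: "(1 - 0) * a2 + A2 * (x - 1) = - a1 / 2"
  proof -
    have neg: "\<And>Z::complex. Z * (x - 1) = - ((1 - x) * Z)" by (simp add: algebra_simps)
    have gen: "\<And>t S::complex. t \<noteq> 0 \<Longrightarrow> t * (S / (2 * t)) = S / 2" by (simp add: field_simps)
    have "A2 * (x - 1) = - ((a1 + 2 * a2) / 2)" unfolding neg A2_def gen[OF x1] ..
    then show ?thesis by (simp add: field_simps)
  qed
  show ?thesis unfolding e1 e2 using Dn by (simp add: divide_simps) (simp add: algebra_simps)
qed

lemma alg_y2:
  fixes x a1 a2 :: complex
  assumes x: "x \<noteq> 0" "x \<noteq> 1" and Dn: "x * a1 + (x - 1) * a2 \<noteq> 0"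
  defines "A1 \<equiv> (-2 * a1 - a2) / (2 * x)" and "A2 \<equiv> (a1 + 2 * a2) / (2 * (1 - x))"
  defines "D \<equiv> x * a1 + (x - 1) * a2"
  shows "((1 * (a1 * a1) + (A1 * a1 + A1 * a1) * x + ((0 - 1) * (a2 * a2) + (A2 * a2 + A2 * a2) * (1 - x)))
            * (2 * (D * D))
          - (x * (a1 * a1) + (1 - x) * (a2 * a2)) * (2 * ((1 * a1 + A1 * x + ((1 - 0) * a2 + A2 * (x - 1))) * D + (1 * a1 + A1 * x + ((1 - 0) * a2 + A2 * (x - 1))) * D)))
         / ((2 * (D * D)) * (2 * (D * D)))
       = ((a2^2 - a1^2) * D + (x * a1^2 + (1 - x) * a2^2) * (a1 + a2)) / (2 * D^3)"
proof -
  have x1: "1 - x \<noteq> 0" using x by auto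
  have Dn': "D \<noteq> 0" using Dn by (simp add: D_def)
  have e1: "1 * a1 + A1 * x = - a2 / 2" using x unfolding A1_def by (simp add: field_simps)
  have gen: "\<And>t S::complex. t \<noteq> 0 \<Longrightarrow> t * (S / (2 * t)) = S / 2" by (simp add: field_simps)
  have e2: "(1 - 0) * a2 + A2 * (x - 1) = - a1 / 2"
  proof -
    have neg: "\<And>Z::complex. Z * (x - 1) = - ((1 - x) * Z)" by (simp add: algebra_simps)
    have "A2 * (x - 1) = - ((a1 + 2 * a2) / 2)" unfolding neg A2_def gen[OF x1] ..
    then show ?thesis by (simp add: field_simps)
  qed
  have e3: "(A1 * a1 + A1 * a1) * x = - a1 * (2 * a1 + a2)"
  proof -
    have hx: "A1 * x = -a1 - a2 / 2" using x unfolding A1_def by (simp add: field_simps)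
    have "(A1 * a1 + A1 * a1) * x = 2 * a1 * (A1 * x)" by (simp add: algebra_simps)
    also have "\<dots> = - a1 * (2 * a1 + a2)" unfolding hx by (simp add: field_simps)
    finally show ?thesis .
  qed
  have e4: "(A2 * a2 + A2 * a2) * (1 - x) = a2 * (a1 + 2 * a2)"
  proof -
    have h2: "(1 - x) * A2 = (a1 + 2 * a2) / 2" unfolding A2_def using gen[OF x1] .
    have "(A2 * a2 + A2 * a2) * (1 - x) = 2 * a2 * ((1 - x) * A2)" by (simp add: algebra_simps)
    also have "\<dots> = a2 * (a1 + 2 * a2)" unfolding h2 by (simp add: field_simps)
    finally show ?thesis .
  qed
  show ?thesis unfolding e1 e2 e3 e4 using Dn' by (simp add: divide_simps) (simp add: algebra_simps power2_eq_square power3_eq_cube)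
qed

lemma lincomb: "c1 * (P / d) + c2 * (Q / d) = (c1 * P + c2 * Q) / (d::complex)"
  by (simp add: add_divide_distrib)

lemma alg_y1:
  fixes x a1 a2 :: complex
  assumes x: "x \<noteq> 0" "x \<noteq> 1" and Dn: "x * a1 + (x - 1) * a2 \<noteq> 0"
  shows "((a1 + x * ((-2 * a1 - a2) / (2 * x))) * (x * a1 + (x - 1) * a2)
          - x * a1 * ((a1 + x * ((-2 * a1 - a2) / (2 * x))) + (a2 + (x - 1) * ((a1 + 2 * a2) / (2 * (1 - x))))))
         / ((x * a1 + (x - 1) * a2) * (x * a1 + (x - 1) * a2))
       = (x * a1^2 + (1 - x) * a2^2) / (2 * (x * a1 + (x - 1) * a2)^2)"
proof -
  have x1: "1 - x \<noteq> 0" using x by auto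
  have e1: "a1 + x * ((-2 * a1 - a2) / (2 * x)) = - a2 / 2" using x by (simp add: field_simps)
  have e2: "a2 + (x - 1) * ((a1 + 2 * a2) / (2 * (1 - x))) = - a1 / 2"
  proof -
    have neg: "\<And>Z::complex. (x - 1) * Z = - ((1 - x) * Z)" by (simp add: algebra_simps)
    have "(x - 1) * ((a1 + 2 * a2) / (2 * (1 - x))) = - ((1 - x) * ((a1 + 2 * a2) / (2 * (1 - x))))"
      by (rule neg)
    also have "(1 - x) * ((a1 + 2 * a2) / (2 * (1 - x))) = (a1 + 2 * a2) / 2"
    proof -
      have gen: "\<And>t S::complex. t \<noteq> 0 \<Longrightarrow> t * (S / (2 * t)) = S / 2" by (simp add: field_simps)
      show ?thesis by (rule gen[OF x1])
    qed
    finally show ?thesis by (simp add: field_simps)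
  qed
  show ?thesis unfolding e1 e2 using Dn by (simp add: divide_simps) (simp add: algebra_simps power2_eq_square)
qed

theorem mainTheorem5:
  fixes U :: "complex set"
    and gA gB vA vB :: "complex \<Rightarrow> real \<Rightarrow> complex"
    and c1 c2 :: complex
  assumes "open U" and "U \<inter> {0, 1} = {}"
    and "lifted_cycle_family U gA vA"
    and "lifted_cycle_family U gB vB"
  defines "a1 \<equiv> \<lambda>x. c1 * curve_period (\<lambda>u. 1 / u) (gA x) (vA x)
                     + c2 * curve_period (\<lambda>u. 1 / u) (gB x) (vB x)"
    and "a2 \<equiv> \<lambda>x. c1 * curve_period (\<lambda>u. 1 / (u - 1)) (gA x) (vA x)
                     + c2 * curve_period (\<lambda>u. 1 / (u - 1)) (gB x) (vB x)"
  shows "let y = (\<lambda>x. x * a1 x / (x * a1 x + (x - 1) * a2 x)) in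
         y holomorphic_on {x \<in> U. x * a1 x + (x - 1) * a2 x \<noteq> 0} \<and>
         (\<forall>x\<in>U. x * a1 x + (x - 1) * a2 x \<noteq> 0 \<longrightarrow> y x \<notin> {0, 1, x} \<longrightarrow>
            painleve_VI (1/8) (-1/8) (1/8) (3/8) y x)"
proof -
  have nz01: "x \<noteq> 0" "x \<noteq> 1" if "x \<in> U" for x using assms(2) that by auto
  define A1' where "A1' = (\<lambda>x. (-2 * a1 x - a2 x) / (2 * x))"
  define A2' where "A2' = (\<lambda>x. (a1 x + 2 * a2 x) / (2 * (1 - x)))"
  have da: "(a1 has_field_derivative A1' x) (at x) \<and> (a2 has_field_derivative A2' x) (at x)" if xU: "x \<in> U" for x
  proof -
    note dA = period_derivs[OF assms(1) assms(3) xU nz01[OF xU]]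
    note dB = period_derivs[OF assms(1) assms(4) xU nz01[OF xU]]
    have x0: "x \<noteq> 0" "1 - x \<noteq> 0" using nz01[OF xU] by auto
    have d1: "(a1 has_field_derivative c1 * ((-2 * curve_period (\<lambda>u. 1 / u) (gA x) (vA x) - curve_period (\<lambda>u. 1 / (u - 1)) (gA x) (vA x)) / (2 * x))
        + c2 * ((-2 * curve_period (\<lambda>u. 1 / u) (gB x) (vB x) - curve_period (\<lambda>u. 1 / (u - 1)) (gB x) (vB x)) / (2 * x))) (at x)"
      unfolding a1_def by (intro DERIV_add DERIV_cmult dA(1) dB(1))
    have d2: "(a2 has_field_derivative c1 * ((curve_period (\<lambda>u. 1 / u) (gA x) (vA x) + 2 * curve_period (\<lambda>u. 1 / (u - 1)) (gA x) (vA x)) / (2 * (1 - x)))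
        + c2 * ((curve_period (\<lambda>u. 1 / u) (gB x) (vB x) + 2 * curve_period (\<lambda>u. 1 / (u - 1)) (gB x) (vB x)) / (2 * (1 - x)))) (at x)"
      unfolding a2_def by (intro DERIV_add DERIV_cmult dA(2) dB(2))
    show ?thesis
    proof
      show "(a1 has_field_derivative A1' x) (at x)" using d1 unfolding lincomb A1'_def
        by (rule DERIV_cong) (simp add: a1_def a2_def algebra_simps)
      show "(a2 has_field_derivative A2' x) (at x)" using d2 unfolding lincomb A2'_def
        by (rule DERIV_cong) (simp add: a1_def a2_def algebra_simps)
    qed
  qed
  define Dd where "Dd = (\<lambda>x. x * a1 x + (x - 1) * a2 x)"
  define W where "W = {x \<in> U. x * a1 x + (x - 1) * a2 x \<noteq> 0}"
  define y where "y = (\<lambda>x. x * a1 x / (x * a1 x + (x - 1) * a2 x))"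
  define Y1f where "Y1f = (\<lambda>x. (x * (a1 x * a1 x) + (1 - x) * (a2 x * a2 x)) / (2 * (Dd x * Dd x)))"
  define Y2f where "Y2f = (\<lambda>x. ((a2 x ^ 2 - a1 x ^ 2) * Dd x + (x * a1 x ^ 2 + (1 - x) * a2 x ^ 2) * (a1 x + a2 x)) / (2 * Dd x ^ 3))"
  have WU: "W \<subseteq> U" unfolding W_def by auto
  have contD: "continuous_on U Dd"
  proof (rule continuous_at_imp_continuous_on, rule ballI)
    fix x assume x: "x \<in> U"
    have "isCont a1 x" "isCont a2 x" using da[OF x] DERIV_isCont by blast+
    then show "isCont Dd x" unfolding Dd_def by (intro continuous_intros) auto
  qed
  have openW: "open W"
  proof -
    have "W = U \<inter> Dd -` (- {0})" unfolding W_def Dd_def by auto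
    then show ?thesis using continuous_open_preimage[OF contD assms(1), of "- {0}"] by auto
  qed
  have dD: "(Dd has_field_derivative (1 * a1 x + A1' x * x) + ((1 - 0) * a2 x + A2' x * (x - 1))) (at x)" if x: "x \<in> U" for x
    unfolding Dd_def using da[OF x]
    by (intro DERIV_add DERIV_mult DERIV_ident DERIV_diff DERIV_const) auto
  have dy: "(y has_field_derivative Y1f x) (at x)" if x: "x \<in> W" for x
  proof -
    have xU: "x \<in> U" and Dn: "Dd x \<noteq> 0" using x unfolding W_def Dd_def by auto
    have dN: "((\<lambda>x. x * a1 x) has_field_derivative 1 * a1 x + A1' x * x) (at x)"
      using da[OF xU] by (intro DERIV_mult DERIV_ident) auto
    have "((\<lambda>x. x * a1 x / Dd x) has_field_derivative
       ((1 * a1 x + A1' x * x) * Dd x - x * a1 x * ((1 * a1 x + A1' x * x) + ((1 - 0) * a2 x + A2' x * (x - 1)))) / (Dd x * Dd x)) (at x)"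
      by (rule DERIV_divide[OF dN dD[OF xU] Dn])
    moreover have "((1 * a1 x + A1' x * x) * Dd x - x * a1 x * ((1 * a1 x + A1' x * x) + ((1 - 0) * a2 x + A2' x * (x - 1)))) / (Dd x * Dd x) = Y1f x"
      unfolding Y1f_def Dd_def A1'_def A2'_def
      by (rule alg_y1'[OF nz01[OF xU] Dn[unfolded Dd_def]])
    ultimately show ?thesis unfolding y_def Dd_def by simp
  qed
  have dY1: "(Y1f has_field_derivative Y2f x) (at x)" if x: "x \<in> W" for x
  proof -
    have xU: "x \<in> U" and Dn: "Dd x \<noteq> 0" using x unfolding W_def Dd_def by auto
    have dn: "((\<lambda>x. x * (a1 x * a1 x) + (1 - x) * (a2 x * a2 x)) has_field_derivative
        1 * (a1 x * a1 x) + (A1' x * a1 x + A1' x * a1 x) * x + ((0 - 1) * (a2 x * a2 x) + (A2' x * a2 x + A2' x * a2 x) * (1 - x))) (at x)"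
      using da[OF xU] by (intro DERIV_add DERIV_mult DERIV_ident DERIV_diff DERIV_const) auto
    have dd: "((\<lambda>x. 2 * (Dd x * Dd x)) has_field_derivative
        2 * (((1 * a1 x + A1' x * x) + ((1 - 0) * a2 x + A2' x * (x - 1))) * Dd x + ((1 * a1 x + A1' x * x) + ((1 - 0) * a2 x + A2' x * (x - 1))) * Dd x)) (at x)"
      by (intro DERIV_cmult DERIV_mult dD[OF xU])
    have dnz: "2 * (Dd x * Dd x) \<noteq> 0" using Dn by simp
    have "(Y1f has_field_derivative
        ((1 * (a1 x * a1 x) + (A1' x * a1 x + A1' x * a1 x) * x + ((0 - 1) * (a2 x * a2 x) + (A2' x * a2 x + A2' x * a2 x) * (1 - x)))
            * (2 * (Dd x * Dd x))
          - (x * (a1 x * a1 x) + (1 - x) * (a2 x * a2 x)) * (2 * (((1 * a1 x + A1' x * x) + ((1 - 0) * a2 x + A2' x * (x - 1))) * Dd x + ((1 * a1 x + A1' x * x) + ((1 - 0) * a2 x + A2' x * (x - 1))) * Dd x)))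
         / ((2 * (Dd x * Dd x)) * (2 * (Dd x * Dd x)))) (at x)"
      unfolding Y1f_def by (rule DERIV_divide[OF dn dd dnz])
    moreover have "((1 * (a1 x * a1 x) + (A1' x * a1 x + A1' x * a1 x) * x + ((0 - 1) * (a2 x * a2 x) + (A2' x * a2 x + A2' x * a2 x) * (1 - x)))
            * (2 * (Dd x * Dd x))
          - (x * (a1 x * a1 x) + (1 - x) * (a2 x * a2 x)) * (2 * (((1 * a1 x + A1' x * x) + ((1 - 0) * a2 x + A2' x * (x - 1))) * Dd x + ((1 * a1 x + A1' x * x) + ((1 - 0) * a2 x + A2' x * (x - 1))) * Dd x)))
         / ((2 * (Dd x * Dd x)) * (2 * (Dd x * Dd x))) = Y2f x"
      unfolding Y2f_def Dd_def A1'_def A2'_def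
      by (rule alg_y2[OF nz01[OF xU] Dn[unfolded Dd_def]])
    ultimately show ?thesis by simp
  qed
  have holo: "y holomorphic_on W"
    using dy openW by (auto simp: holomorphic_on_open)
  have pv: "painleve_VI (1/8) (-1/8) (1/8) (3/8) y x"
    if xU: "x \<in> U" and Dn: "x * a1 x + (x - 1) * a2 x \<noteq> 0" and yx: "y x \<notin> {0, 1, x}" for x
  proof -
    have xW: "x \<in> W" using xU Dn unfolding W_def by auto
    have d1: "deriv y x = Y1f x" by (rule DERIV_imp_deriv[OF dy[OF xW]])
    have "(deriv y has_field_derivative Y2f x) (at x)"
      by (rule has_field_derivative_transform_within_open[OF dY1[OF xW] openW xW])
         (use dy in \<open>auto intro: DERIV_imp_deriv[symmetric]\<close>)
    then have d2: "deriv (deriv y) x = Y2f x" by (rule DERIV_imp_deriv)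
    have x0: "x \<noteq> 0" "x \<noteq> 1" using nz01[OF xU] by auto
    have na1: "a1 x \<noteq> 0" using yx unfolding y_def by auto
    have na2: "a2 x \<noteq> 0"
    proof
      assume "a2 x = 0"
      then have "y x = 1" using Dn unfolding y_def by simp
      then show False using yx by auto
    qed
    have na12: "a1 x + a2 x \<noteq> 0"
    proof
      assume h: "a1 x + a2 x = 0"
      then have "a2 x = - a1 x" by (simp add: add_eq_0_iff)
      then have "x * a1 x + (x - 1) * a2 x = a1 x" by (simp add: algebra_simps)
      then have "y x = x" using na1 unfolding y_def by simp
      then show False using yx by auto
    qed
    have main: "deriv (deriv y) x = 1/2 * (1/(y x) + 1/(y x - 1) + 1/(y x - x)) * (deriv y x)\<^sup>2
            - (1/x + 1/(x - 1) + 1/(y x - x)) * deriv y x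
            + y x * (y x - 1) * (y x - x) / (x\<^sup>2 * (x - 1)\<^sup>2)
              * (1/8 + (-1/8) * x / (y x)\<^sup>2 + 1/8 * (x - 1) / (y x - 1)\<^sup>2 + 3/8 * x * (x - 1) / (y x - x)\<^sup>2)"
    proof (rule pvi_alg[OF x0 Dn na1 na2 na12])
      show "y x = x * a1 x / (x * a1 x + (x - 1) * a2 x)" unfolding y_def ..
      show "deriv y x = (x * a1 x ^ 2 + (1 - x) * a2 x ^ 2) / (2 * (x * a1 x + (x - 1) * a2 x)\<^sup>2)"
        unfolding d1 Y1f_def Dd_def by (simp add: power2_eq_square)
      show "deriv (deriv y) x = ((a2 x ^ 2 - a1 x ^ 2) * (x * a1 x + (x - 1) * a2 x) + (x * a1 x ^ 2 + (1 - x) * a2 x ^ 2) * (a1 x + a2 x)) / (2 * (x * a1 x + (x - 1) * a2 x) ^ 3)"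
        unfolding d2 Y2f_def Dd_def ..
    qed
    show ?thesis unfolding painleve_VI_def Let_def using main by simp
  qed
  show ?thesis unfolding Let_def
    using holo pv unfolding y_def W_def by auto
qed

end
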